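(* Fix $0<\alpha<1$ and let $\Lambda\subset\mathbb{R}^n$ be a closed subset of Lebesgue measure zero. Let $f\in L_{2\alpha}(\mathbb{R}^n)\cap C^\infty(\mathbb{R}^n\setminus\Lambda)$ and let $f_\epsilon=f*\eta_\epsilon$ be its standard mollification. Then for every $x\in\mathbb{R}^n\setminus\Lambda$, $$\lim_{\epsilon\to0}\big((-\Delta)^\alpha f_\epsilon\big)(x)=\big((-\Delta)^\alpha f\big)(x).$$
   Context: $L_{2\alpha}(\mathbb{R}^n)=\{h:\mathbb{R}^n\to\mathbb{R}:\int_{\mathbb{R}^n}\frac{|h(x)|}{1+|x|^{n+2\alpha}}dx<\infty\}$. The standard mollifier: $\eta\in C_0^\infty(\mathbb{R}^n)$, $\eta\geq0$, $\mathrm{supp}(\eta)\subset B_1(0)$, $\int\eta=1$, $\eta_\epsilon(x)=\epsilon^{-n}\eta(x/\epsilon)$, and $f_\epsilon(x)=\int_{\mathbb{R}^n}f(x-y)\eta_\epsilon(y)dy$. The fractional Laplacian is $(-\Delta)^\alpha h(x)=-d_{n,\alpha}\int_{\mathbb{R}^n}\frac{h(x+y)+h(x-y)-2h(x)}{|y|^{n+2\alpha}}dy$ for $h\in L_{2\alpha}(\mathbb{R}^n)$, with $d_{n,\alpha}>0$ the normalizing constant making the Fourier symbol $|\xi|^{2\alpha}$. *)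

theory Defs
  imports "HOL-Analysis.Analysis"
begin

definition dir_deriv :: "'a::euclidean_space \<Rightarrow> ('a \<Rightarrow> real) \<Rightarrow> 'a \<Rightarrow> real" where
  "dir_deriv v f x = deriv (\<lambda>t. f (x + t *\<^sub>R v)) 0"

fun iter_pderiv :: "'a::euclidean_space list \<Rightarrow> ('a \<Rightarrow> real) \<Rightarrow> 'a \<Rightarrow> real" where
  "iter_pderiv [] f = f"
| "iter_pderiv (v # vs) f = dir_deriv v (iter_pderiv vs f)"

definition smooth_on :: "('a::euclidean_space \<Rightarrow> real) \<Rightarrow> 'a set \<Rightarrow> bool" where
  "smooth_on f S \<longleftrightarrow>
     (\<forall>vs. set vs \<subseteq> Basis \<longrightarrow>
        continuous_on S (iter_pderiv vs f) \<and>
        (\<forall>v\<in>Basis. \<forall>x\<in>S. (\<lambda>t. iter_pderiv vs f (x + t *\<^sub>R v)) differentiable (at 0)))"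

definition L2alpha :: "real \<Rightarrow> ('a::euclidean_space \<Rightarrow> real) set" where
  "L2alpha \<alpha> = {h. integrable lebesgue
       (\<lambda>x. \<bar>h x\<bar> / (1 + norm x powr (real DIM('a) + 2 * \<alpha>)))}"

definition std_mollifier :: "('a::euclidean_space \<Rightarrow> real) \<Rightarrow> bool" where
  "std_mollifier \<eta> \<longleftrightarrow> smooth_on \<eta> UNIV \<and> (\<forall>x. \<eta> x \<ge> 0)
     \<and> closure {x. \<eta> x \<noteq> 0} \<subseteq> ball 0 1 \<and> integral\<^sup>L lebesgue \<eta> = 1"

definition mollify :: "('a::euclidean_space \<Rightarrow> real) \<Rightarrow> real \<Rightarrow> ('a \<Rightarrow> real) \<Rightarrow> 'a \<Rightarrow> real" where
  "mollify \<eta> \<epsilon> f x =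
     integral\<^sup>L lebesgue (\<lambda>y. f (x - y) * ((1 / \<epsilon> ^ DIM('a)) * \<eta> ((1 / \<epsilon>) *\<^sub>R y)))"

text \<open>Normalizing constant d_{n,alpha} for which the singular integral below has
  Fourier symbol |xi|^(2 alpha): it equals C(n,alpha)/2 where
  C(n,alpha) = alpha 4^alpha Gamma((n+2 alpha)/2) / (pi^(n/2) Gamma(1-alpha)).\<close>
definition frac_const :: "nat \<Rightarrow> real \<Rightarrow> real" where
  "frac_const n \<alpha> = \<alpha> * 2 powr (2 * \<alpha> - 1) * Gamma ((real n + 2 * \<alpha>) / 2)
                     / (pi powr (real n / 2) * Gamma (1 - \<alpha>))"

definition frac_lap :: "real \<Rightarrow> ('a::euclidean_space \<Rightarrow> real) \<Rightarrow> 'a \<Rightarrow> real" where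
  "frac_lap \<alpha> h x = - frac_const DIM('a) \<alpha> *
     integral\<^sup>L lebesgue (\<lambda>y. (h (x + y) + h (x - y) - 2 * h x)
                              / norm y powr (real DIM('a) + 2 * \<alpha>))"

end

theory Submission
  imports Defs
begin
lemma smooth_DERIV:
  assumes sm: "smooth_on g S" and vs: "set vs \<subseteq> Basis" and j: "j \<in> Basis"
    and zS: "z + t *\<^sub>R j \<in> S"
  shows "((\<lambda>s. iter_pderiv vs g (z + s *\<^sub>R j)) has_real_derivative
           iter_pderiv (j # vs) g (z + t *\<^sub>R j)) (at t)"
proof -
  let ?h = "iter_pderiv vs g"
  let ?u = "z + t *\<^sub>R j"
  have "(\<lambda>s. ?h (?u + s *\<^sub>R j)) differentiable (at 0)"
    using sm vs j zS unfolding smooth_on_def by blast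
  then have d0: "((\<lambda>s. ?h (?u + s *\<^sub>R j)) has_real_derivative deriv (\<lambda>s. ?h (?u + s *\<^sub>R j)) 0) (at 0)"
    using DERIV_deriv_iff_real_differentiable by blast
  have eq: "(\<lambda>s. ?h (?u + s *\<^sub>R j)) = (\<lambda>s. ?h (z + (s + t) *\<^sub>R j))"
    by (auto simp: algebra_simps scaleR_add_left)
  have "deriv (\<lambda>s. ?h (?u + s *\<^sub>R j)) 0 = iter_pderiv (j # vs) g ?u"
    by (simp add: dir_deriv_def)
  with d0 eq have "((\<lambda>s. ?h (z + (s + t) *\<^sub>R j)) has_real_derivative iter_pderiv (j # vs) g ?u) (at 0)"
    by simp
  then show ?thesis
    using DERIV_shift[of "\<lambda>s. ?h (z + s *\<^sub>R j)" _ 0 t] by simp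
qed

lemma mvt_bound:
  fixes F F' :: "real \<Rightarrow> real"
  assumes "\<And>s. min a b \<le> s \<Longrightarrow> s \<le> max a b \<Longrightarrow> (F has_real_derivative F' s) (at s) \<and> \<bar>F' s\<bar> \<le> B"
  shows "\<bar>F b - F a\<bar> \<le> B * \<bar>b - a\<bar>"
proof (cases a b rule: linorder_cases)
  case less
  then obtain z where z: "a < z" "z < b" "F b - F a = (b - a) * F' z"
    using MVT2[of a b F F'] assms by fastforce
  with assms[of z] less show ?thesis
    by (simp add: abs_mult mult.commute mult_left_mono)
next
  case greater
  then obtain z where z: "b < z" "z < a" "F a - F b = (a - b) * F' z"
    using MVT2[of b a F F'] assms by fastforce
  with assms[of z] greater show ?thesis
    by (simp add: abs_mult mult.commute mult_left_mono abs_minus_commute)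
qed simp

definition mixp :: "'a::euclidean_space \<Rightarrow> 'a \<Rightarrow> 'a set \<Rightarrow> 'a" where
  "mixp p q A = p + (\<Sum>i\<in>A. ((q - p) \<bullet> i) *\<^sub>R i)"

lemma mixp_inner:
  assumes "A \<subseteq> Basis" "k \<in> Basis"
  shows "mixp p q A \<bullet> k = p \<bullet> k + (if k \<in> A then (q - p) \<bullet> k else 0)"
proof -
  have fin: "finite A" using assms finite_subset finite_Basis by blast
  have "(\<Sum>i\<in>A. ((q - p) \<bullet> i) *\<^sub>R i) \<bullet> k = (\<Sum>i\<in>A. ((q - p) \<bullet> i) * (i \<bullet> k))"
    by (simp add: inner_sum_left)
  also have "\<dots> = (\<Sum>i\<in>A. if i = k then (q - p) \<bullet> i else 0)"
    using assms by (intro sum.cong) (auto simp: inner_Basis)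
  also have "\<dots> = (if k \<in> A then (q - p) \<bullet> k else 0)"
    using fin by (simp add: sum.delta')
  finally show ?thesis by (simp add: mixp_def inner_add_left)
qed

lemma mixp_insert:
  assumes "finite A" "j \<notin> A"
  shows "mixp p q (insert j A) = mixp p q A + ((q - p) \<bullet> j) *\<^sub>R j"
  using assms by (simp add: mixp_def algebra_simps)

lemma mixp_Basis: "mixp p q Basis = q"
  by (simp add: mixp_def euclidean_representation)

lemma coord_lip:
  fixes g :: "'a::euclidean_space \<Rightarrow> real"
  assumes der: "\<And>z i t. i \<in> Basis \<Longrightarrow> z + t *\<^sub>R i \<in> cbox a b \<Longrightarrow>
        ((\<lambda>s. g (z + s *\<^sub>R i)) has_real_derivative d i (z + t *\<^sub>R i)) (at t)"
    and bnd: "\<And>z i. i \<in> Basis \<Longrightarrow> z \<in> cbox a b \<Longrightarrow> \<bar>d i z\<bar> \<le> B"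
    and p: "p \<in> cbox a b" and q: "q \<in> cbox a b"
  shows "\<bar>g q - g p\<bar> \<le> B * (\<Sum>i\<in>Basis. \<bar>(q - p) \<bullet> i\<bar>)"
proof -
  have main: "A \<subseteq> Basis \<Longrightarrow> \<bar>g (mixp p q A) - g p\<bar> \<le> B * (\<Sum>i\<in>A. \<bar>(q - p) \<bullet> i\<bar>)" for A
  proof (induction A rule: infinite_finite_induct)
    case (infinite A)
    then show ?case using finite_subset finite_Basis by blast
  next
    case empty
    then show ?case by (simp add: mixp_def)
  next
    case (insert j A)
    let ?z = "mixp p q A"
    let ?c = "(q - p) \<bullet> j"
    have jB: "j \<in> Basis" and AB: "A \<subseteq> Basis" using insert by auto
    have seg: "?z + t *\<^sub>R j \<in> cbox a b" if t1: "min 0 ?c \<le> t" "t \<le> max 0 ?c" for t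
    proof -
      have "a \<bullet> k \<le> (?z + t *\<^sub>R j) \<bullet> k \<and> (?z + t *\<^sub>R j) \<bullet> k \<le> b \<bullet> k" if k: "k \<in> Basis" for k
      proof -
        have pk: "a \<bullet> k \<le> p \<bullet> k" "p \<bullet> k \<le> b \<bullet> k" "a \<bullet> k \<le> q \<bullet> k" "q \<bullet> k \<le> b \<bullet> k"
          using p q k by (auto simp: mem_box)
        have "(?z + t *\<^sub>R j) \<bullet> k = p \<bullet> k + (if k \<in> A then (q - p) \<bullet> k else 0) + t * (j \<bullet> k)"
          using mixp_inner[OF AB k] by (simp add: inner_add_left)
        moreover have "j \<bullet> k = (if j = k then 1 else 0)" using jB k by (simp add: inner_Basis)
        ultimately show ?thesis
          using pk t1 insert.hyps(2) by (auto simp: inner_diff_left split: if_splits)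
      qed
      then show ?thesis by (simp add: mem_box)
    qed
    have "\<bar>g (?z + ?c *\<^sub>R j) - g (?z + 0 *\<^sub>R j)\<bar> \<le> B * \<bar>?c - 0\<bar>"
      by (rule mvt_bound[where F'="\<lambda>s. d j (?z + s *\<^sub>R j)"])
         (use seg der[OF jB] bnd[OF jB] in auto)
    then have "\<bar>g (mixp p q (insert j A)) - g ?z\<bar> \<le> B * \<bar>?c\<bar>"
      using mixp_insert[OF insert.hyps] by simp
    with insert.IH[OF AB] insert.hyps show ?case
      by (simp add: algebra_simps)
  qed
  show ?thesis using main[of Basis] by (simp add: mixp_Basis)
qed

lemma second_diff:
  fixes f :: "'a::euclidean_space \<Rightarrow> real"
  assumes der1: "\<And>z j t. j \<in> Basis \<Longrightarrow> z + t *\<^sub>R j \<in> Q \<Longrightarrow>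
        ((\<lambda>s. f (z + s *\<^sub>R j)) has_real_derivative d j (z + t *\<^sub>R j)) (at t)"
    and lip: "\<And>j u v. j \<in> Basis \<Longrightarrow> u \<in> Q \<Longrightarrow> v \<in> Q \<Longrightarrow>
        \<bar>d j u - d j v\<bar> \<le> L * (\<Sum>i\<in>Basis. \<bar>(u - v) \<bullet> i\<bar>)"
    and inQ: "\<And>c. (\<forall>i\<in>Basis. \<bar>c \<bullet> i\<bar> \<le> \<bar>y \<bullet> i\<bar>) \<Longrightarrow> w + c \<in> Q"
  shows "\<bar>f (w + y) + f (w - y) - 2 * f w\<bar> \<le> L * (\<Sum>i\<in>Basis. \<bar>y \<bullet> i\<bar>)\<^sup>2"
proof -
  let ?Y = "\<Sum>i\<in>Basis. \<bar>y \<bullet> i\<bar>"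
  let ?m = "\<lambda>A. mixp w (w + y) A"
  let ?E = "\<lambda>A. f (?m A) - f w - (f (?m A - y) - f (w - y))"
  have main: "A \<subseteq> Basis \<Longrightarrow> \<bar>?E A\<bar> \<le> L * ?Y * (\<Sum>i\<in>A. \<bar>y \<bullet> i\<bar>)" for A
  proof (induction A rule: infinite_finite_induct)
    case (infinite A)
    then show ?case using finite_subset finite_Basis by blast
  next
    case empty
    then show ?case by (simp add: mixp_def)
  next
    case (insert j A)
    let ?z = "?m A"
    let ?c = "y \<bullet> j"
    have jB: "j \<in> Basis" and AB: "A \<subseteq> Basis" using insert by auto
    have zk: "?z \<bullet> k = w \<bullet> k + (if k \<in> A then y \<bullet> k else 0)" if "k \<in> Basis" for k
      using mixp_inner[OF AB that, of w "w + y"] by simp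
    have jk: "j \<bullet> k = (if j = k then 1 else 0)" if "k \<in> Basis" for k
      using jB that by (simp add: inner_Basis)
    have P1: "?z + t *\<^sub>R j \<in> Q" and P2: "?z - y + t *\<^sub>R j \<in> Q"
      if t1: "min 0 ?c \<le> t" "t \<le> max 0 ?c" for t
    proof -
      have "w + (?z + t *\<^sub>R j - w) \<in> Q"
      proof (rule inQ, intro ballI)
        fix i :: 'a assume i: "i \<in> Basis"
        show "\<bar>(?z + t *\<^sub>R j - w) \<bullet> i\<bar> \<le> \<bar>y \<bullet> i\<bar>"
          using zk[OF i] jk[OF i] t1 insert.hyps(2) by (auto simp: inner_diff_left inner_add_left)
      qed
      then show "?z + t *\<^sub>R j \<in> Q" by simp
      have "w + (?z - y + t *\<^sub>R j - w) \<in> Q"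
      proof (rule inQ, intro ballI)
        fix i :: 'a assume i: "i \<in> Basis"
        show "\<bar>(?z - y + t *\<^sub>R j - w) \<bullet> i\<bar> \<le> \<bar>y \<bullet> i\<bar>"
          using zk[OF i] jk[OF i] t1 insert.hyps(2) by (auto simp: inner_diff_left inner_add_left)
      qed
      then show "?z - y + t *\<^sub>R j \<in> Q" by simp
    qed
    define F where "F = (\<lambda>t. f (?z + t *\<^sub>R j) - f (?z - y + t *\<^sub>R j))"
    define F' where "F' = (\<lambda>t. d j (?z + t *\<^sub>R j) - d j (?z - y + t *\<^sub>R j))"
    have "\<bar>F ?c - F 0\<bar> \<le> (L * ?Y) * \<bar>?c - 0\<bar>"
    proof (rule mvt_bound)
      fix t assume t1: "min 0 ?c \<le> t" "t \<le> max 0 ?c"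
      show "(F has_real_derivative F' t) (at t) \<and> \<bar>F' t\<bar> \<le> L * ?Y"
      proof
        show "(F has_real_derivative F' t) (at t)"
          unfolding F_def F'_def by (intro DERIV_diff der1 jB P1 P2 t1)
        have "\<bar>d j (?z + t *\<^sub>R j) - d j (?z - y + t *\<^sub>R j)\<bar>
              \<le> L * (\<Sum>i\<in>Basis. \<bar>((?z + t *\<^sub>R j) - (?z - y + t *\<^sub>R j)) \<bullet> i\<bar>)"
          by (intro lip jB P1 P2 t1)
        then show "\<bar>F' t\<bar> \<le> L * ?Y" by (simp add: F'_def)
      qed
    qed
    then have "\<bar>(f (?z + ?c *\<^sub>R j) - f (?z - y + ?c *\<^sub>R j)) - (f ?z - f (?z - y))\<bar> \<le> L * ?Y * \<bar>?c\<bar>"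
      by (simp add: F_def)
    moreover have "?m (insert j A) = ?z + ?c *\<^sub>R j"
      using mixp_insert[OF insert.hyps, of w "w + y"] by simp
    ultimately have "\<bar>?E (insert j A) - ?E A\<bar> \<le> L * ?Y * \<bar>?c\<bar>"
      by (simp add: algebra_simps)
    with insert.IH[OF AB] insert.hyps show ?case
      by (simp add: algebra_simps)
  qed
  have "\<bar>?E Basis\<bar> \<le> L * ?Y * ?Y" using main[of Basis] by simp
  moreover have "?E Basis = f (w + y) + f (w - y) - 2 * f w"
    by (simp add: mixp_Basis)
  ultimately show ?thesis by (simp add: power2_eq_square mult.assoc)
qed

lemma local_second_diff:
  fixes f :: "'a::euclidean_space \<Rightarrow> real"
  assumes sm: "smooth_on f S" and S: "open S" and xS: "x \<in> S"
  obtains r M where "r > 0" "M \<ge> 0" "cball x (2 * r) \<subseteq> S"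
    "\<And>w y. w \<in> cball x r \<Longrightarrow> y \<in> cball 0 r \<Longrightarrow>
        \<bar>f (w + y) + f (w - y) - 2 * f w\<bar> \<le> M * (norm y)\<^sup>2"
proof -
  obtain e where e: "e > 0" "ball x e \<subseteq> S" using S xS open_contains_ball by blast
  define n where "n = real DIM('a)"
  have n1: "n \<ge> 1" by (simp add: n_def DIM_positive Suc_leI)
  define \<rho> where "\<rho> = e / (2 * n)"
  have \<rho>: "\<rho> > 0" using e n1 by (simp add: \<rho>_def)
  define Q where "Q = cbox (x - \<rho> *\<^sub>R One) (x + \<rho> *\<^sub>R One)"
  have Qk: "z \<in> Q \<longleftrightarrow> (\<forall>i\<in>Basis. \<bar>(z - x) \<bullet> i\<bar> \<le> \<rho>)" for z
    by (auto simp: Q_def mem_box inner_diff_left inner_add_left abs_le_iff algebra_simps)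
  have QS: "Q \<subseteq> S"
  proof
    fix z assume z: "z \<in> Q"
    have "norm (z - x) \<le> (\<Sum>i\<in>Basis. \<bar>(z - x) \<bullet> i\<bar>)" by (rule norm_le_l1)
    also have "\<dots> \<le> (\<Sum>i\<in>(Basis::'a set). \<rho>)" using z Qk by (intro sum_mono) auto
    also have "\<dots> = n * \<rho>" by (simp add: n_def)
    also have "\<dots> < e" using e n1 by (simp add: \<rho>_def)
    finally show "z \<in> S" using e by (auto simp: dist_norm norm_minus_commute)
  qed
  have cQ: "compact Q" by (simp add: Q_def)
  define G where "G = (\<lambda>z. \<Sum>i\<in>Basis. \<Sum>k\<in>Basis. \<bar>iter_pderiv [i, k] f z\<bar>)"
  have "continuous_on Q G"
    unfolding G_def
  proof (intro continuous_intros)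
    fix i k :: 'a assume "i \<in> Basis" "k \<in> Basis"
    then have "continuous_on S (iter_pderiv [i, k] f)"
      using sm[unfolded smooth_on_def, THEN spec[of _ "[i, k]"]] by auto
    then show "continuous_on Q (iter_pderiv [i, k] f)" using QS continuous_on_subset by blast
  qed
  then have "bounded (G ` Q)" using cQ compact_continuous_image compact_imp_bounded by blast
  then obtain B where B: "\<And>z. z \<in> Q \<Longrightarrow> \<bar>G z\<bar> \<le> B" by (auto simp: bounded_real)
  have B0: "B \<ge> 0" using B[of x] Qk \<rho> by force
  have Bik: "\<bar>iter_pderiv [i, k] f z\<bar> \<le> B" if "i \<in> Basis" "k \<in> Basis" "z \<in> Q" for i k z
  proof -
    have "\<bar>iter_pderiv [i, k] f z\<bar> \<le> (\<Sum>k\<in>Basis. \<bar>iter_pderiv [i, k] f z\<bar>)"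
      using that by (intro member_le_sum) auto
    also have "\<dots> \<le> G z" unfolding G_def using that by (intro member_le_sum) auto
    also have "\<dots> \<le> B" using B[OF that(3)] by simp
    finally show ?thesis .
  qed
  have lip: "\<bar>iter_pderiv [k] f u - iter_pderiv [k] f v\<bar> \<le> B * (\<Sum>i\<in>Basis. \<bar>(u - v) \<bullet> i\<bar>)"
    if k: "k \<in> Basis" and u: "u \<in> Q" and v: "v \<in> Q" for k u v
  proof (rule coord_lip[where d="\<lambda>i. iter_pderiv [i, k] f"])
    show "u \<in> cbox (x - \<rho> *\<^sub>R One) (x + \<rho> *\<^sub>R One)" "v \<in> cbox (x - \<rho> *\<^sub>R One) (x + \<rho> *\<^sub>R One)"
      using u v by (auto simp: Q_def)
    fix z i t assume i: "(i::'a) \<in> Basis" and zt: "z + t *\<^sub>R i \<in> cbox (x - \<rho> *\<^sub>R One) (x + \<rho> *\<^sub>R One)"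
    show "((\<lambda>s. iter_pderiv [k] f (z + s *\<^sub>R i)) has_real_derivative iter_pderiv [i, k] f (z + t *\<^sub>R i)) (at t)"
      using smooth_DERIV[OF sm _ i, of "[k]" z t] k zt QS by (auto simp: Q_def)
  next
    fix z i assume "(i::'a) \<in> Basis" "z \<in> cbox (x - \<rho> *\<^sub>R One) (x + \<rho> *\<^sub>R One)"
    then show "\<bar>iter_pderiv [i, k] f z\<bar> \<le> B" using Bik k by (auto simp: Q_def)
  qed
  define r where "r = \<rho> / 2"
  have r: "r > 0" using \<rho> by (simp add: r_def)
  have c2: "cball x (2 * r) \<subseteq> S"
  proof
    fix z assume "z \<in> cball x (2 * r)"
    then have "dist x z \<le> e / (2 * n)" by (simp add: r_def \<rho>_def)
    also have "\<dots> \<le> e / 2" using e n1 by (intro divide_left_mono) auto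
    also have "\<dots> < e" using e by simp
    finally have "dist x z < e" .
    then show "z \<in> S" using e by auto
  qed
  have est: "\<bar>f (w + y) + f (w - y) - 2 * f w\<bar> \<le> (B * n\<^sup>2) * (norm y)\<^sup>2"
    if w: "w \<in> cball x r" and y: "y \<in> cball 0 r" for w y
  proof -
    have "\<bar>f (w + y) + f (w - y) - 2 * f w\<bar> \<le> B * (\<Sum>i\<in>Basis. \<bar>y \<bullet> i\<bar>)\<^sup>2"
    proof (rule second_diff[where Q=Q and d="\<lambda>j. iter_pderiv [j] f"])
      fix z j t assume j: "(j::'a) \<in> Basis" and zt: "z + t *\<^sub>R j \<in> Q"
      show "((\<lambda>s. f (z + s *\<^sub>R j)) has_real_derivative iter_pderiv [j] f (z + t *\<^sub>R j)) (at t)"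
        using smooth_DERIV[OF sm _ j, of "[]" z t] zt QS by auto
    next
      fix j u v assume "(j::'a) \<in> Basis" "u \<in> Q" "v \<in> Q"
      then show "\<bar>iter_pderiv [j] f u - iter_pderiv [j] f v\<bar> \<le> B * (\<Sum>i\<in>Basis. \<bar>(u - v) \<bullet> i\<bar>)"
        by (rule lip)
    next
      fix c assume c: "\<forall>i\<in>Basis. \<bar>c \<bullet> i\<bar> \<le> \<bar>y \<bullet> i\<bar>"
      show "w + c \<in> Q" unfolding Qk
      proof
        fix i :: 'a assume i: "i \<in> Basis"
        have "\<bar>(w - x) \<bullet> i\<bar> \<le> norm (w - x)" using Basis_le_norm i by blast
        also have "\<dots> \<le> r" using w by (simp add: dist_norm norm_minus_commute)
        finally have 1: "\<bar>(w - x) \<bullet> i\<bar> \<le> r" .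
        have "\<bar>c \<bullet> i\<bar> \<le> norm y" using c i Basis_le_norm order_trans by blast
        also have "\<dots> \<le> r" using y by simp
        finally have 2: "\<bar>c \<bullet> i\<bar> \<le> r" .
        have "\<bar>(w + c - x) \<bullet> i\<bar> \<le> \<bar>(w - x) \<bullet> i\<bar> + \<bar>c \<bullet> i\<bar>"
          by (simp add: inner_diff_left inner_add_left abs_triangle_ineq[of _ "c \<bullet> i", simplified] algebra_simps)
        with 1 2 show "\<bar>(w + c - x) \<bullet> i\<bar> \<le> \<rho>" by (simp add: r_def)
      qed
    qed
    also have "\<dots> \<le> B * (n * norm y)\<^sup>2"
    proof -
      have "(\<Sum>i\<in>Basis. \<bar>y \<bullet> i\<bar>) \<le> (\<Sum>i\<in>(Basis::'a set). norm y)"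
        by (intro sum_mono Basis_le_norm) auto
      then have "(\<Sum>i\<in>Basis. \<bar>y \<bullet> i\<bar>) \<le> n * norm y" by (simp add: n_def)
      moreover have "0 \<le> (\<Sum>i\<in>Basis. \<bar>y \<bullet> i\<bar>)" by (simp add: sum_nonneg)
      ultimately show ?thesis using B0 by (intro mult_left_mono power_mono) auto
    qed
    finally show ?thesis by (simp add: power_mult_distrib)
  qed
  show ?thesis
    by (rule that[OF r _ c2 est]) (use B0 in auto)
qed

lemma lborel_affine_integrable_iff:
  fixes g :: "'a::euclidean_space \<Rightarrow> real"
  assumes c: "c \<noteq> 0" and g[measurable]: "g \<in> borel_measurable borel"
  shows "integrable lborel (\<lambda>y. g (t + c *\<^sub>R y)) \<longleftrightarrow> integrable lborel g"
proof -
  have T[measurable]: "(\<lambda>y::'a. t + c *\<^sub>R y) \<in> borel_measurable borel" by simp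
  have "integrable lborel g \<longleftrightarrow>
        integrable (density (distr lborel borel (\<lambda>x. t + c *\<^sub>R x)) (\<lambda>_. \<bar>c\<bar>^DIM('a))) g"
    using lborel_affine[OF c, of t] by simp
  also have "\<dots> \<longleftrightarrow> integrable (distr lborel borel (\<lambda>x. t + c *\<^sub>R x)) (\<lambda>y. \<bar>c\<bar>^DIM('a) *\<^sub>R g y)"
    by (subst integrable_density) auto
  also have "\<dots> \<longleftrightarrow> integrable lborel (\<lambda>y. \<bar>c\<bar>^DIM('a) *\<^sub>R g (t + c *\<^sub>R y))"
    by (subst integrable_distr_eq) auto
  also have "\<dots> \<longleftrightarrow> integrable lborel (\<lambda>y. g (t + c *\<^sub>R y))"
    using c by simp
  finally show ?thesis ..
qed

lemma lborel_affine_integral: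
  fixes g :: "'a::euclidean_space \<Rightarrow> real"
  assumes c: "c \<noteq> 0" and g[measurable]: "g \<in> borel_measurable borel"
  shows "(\<integral>y. g (t + c *\<^sub>R y) \<partial>lborel) = (\<integral>y. g y \<partial>lborel) / \<bar>c\<bar>^DIM('a)"
proof -
  have T[measurable]: "(\<lambda>y::'a. t + c *\<^sub>R y) \<in> borel_measurable borel" by simp
  have "(\<integral>y. g y \<partial>lborel) =
        (\<integral>y. g y \<partial>(density (distr lborel borel (\<lambda>x. t + c *\<^sub>R x)) (\<lambda>_. \<bar>c\<bar>^DIM('a))))"
    using lborel_affine[OF c, of t] by simp
  also have "\<dots> = (\<integral>y. \<bar>c\<bar>^DIM('a) *\<^sub>R g y \<partial>distr lborel borel (\<lambda>x. t + c *\<^sub>R x))"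
    by (subst integral_density) auto
  also have "\<dots> = (\<integral>y. \<bar>c\<bar>^DIM('a) *\<^sub>R g (t + c *\<^sub>R y) \<partial>lborel)"
    by (subst integral_distr) auto
  also have "\<dots> = \<bar>c\<bar>^DIM('a) * (\<integral>y. g (t + c *\<^sub>R y) \<partial>lborel)"
    by simp
  finally show ?thesis using c by simp
qed

lemma lborel_affine_nn_integral:
  fixes g :: "'a::euclidean_space \<Rightarrow> ennreal"
  assumes c: "c \<noteq> 0" and g[measurable]: "g \<in> borel_measurable borel"
  shows "(\<integral>\<^sup>+y. g y \<partial>lborel) = ennreal (\<bar>c\<bar>^DIM('a)) * (\<integral>\<^sup>+y. g (t + c *\<^sub>R y) \<partial>lborel)"
proof -
  have T[measurable]: "(\<lambda>y::'a. t + c *\<^sub>R y) \<in> borel_measurable borel" by simp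
  have "(\<integral>\<^sup>+y. g y \<partial>lborel) =
        (\<integral>\<^sup>+y. g y \<partial>(density (distr lborel borel (\<lambda>x. t + c *\<^sub>R x)) (\<lambda>_. \<bar>c\<bar>^DIM('a))))"
    using lborel_affine[OF c, of t] by simp
  also have "\<dots> = (\<integral>\<^sup>+y. ennreal (\<bar>c\<bar>^DIM('a)) * g y \<partial>distr lborel borel (\<lambda>x. t + c *\<^sub>R x))"
    by (subst nn_integral_density) auto
  also have "\<dots> = (\<integral>\<^sup>+y. ennreal (\<bar>c\<bar>^DIM('a)) * g (t + c *\<^sub>R y) \<partial>lborel)"
    by (subst nn_integral_distr) auto
  also have "\<dots> = ennreal (\<bar>c\<bar>^DIM('a)) * (\<integral>\<^sup>+y. g (t + c *\<^sub>R y) \<partial>lborel)"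
    by (simp add: nn_integral_cmult)
  finally show ?thesis .
qed

lemma null_affine:
  fixes N :: "'a::euclidean_space set"
  assumes c: "c \<noteq> 0" and N: "N \<in> null_sets lborel"
  shows "{y. t + c *\<^sub>R y \<in> N} \<in> null_sets lborel"
proof -
  have Nb[measurable]: "N \<in> sets borel" using N by auto
  have "emeasure lborel N = ennreal (\<bar>c\<bar>^DIM('a)) * (\<integral>\<^sup>+y. indicator N (t + c *\<^sub>R y) \<partial>lborel)"
    using lborel_affine_nn_integral[OF c, of "indicator N" t] by simp
  moreover have "(\<integral>\<^sup>+y. indicator N (t + c *\<^sub>R y) \<partial>lborel) = emeasure lborel {y. t + c *\<^sub>R y \<in> N}"
  proof -
    have "{y. t + c *\<^sub>R y \<in> N} \<in> sets lborel" by measurable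
    then have "emeasure lborel {y. t + c *\<^sub>R y \<in> N} = (\<integral>\<^sup>+y. indicator {y. t + c *\<^sub>R y \<in> N} y \<partial>lborel)"
      by simp
    also have "\<dots> = (\<integral>\<^sup>+y. indicator N (t + c *\<^sub>R y) \<partial>lborel)"
      by (intro nn_integral_cong) (simp split: split_indicator)
    finally show ?thesis ..
  qed
  ultimately have "emeasure lborel {y. t + c *\<^sub>R y \<in> N} = 0"
    using N c by (auto simp: mult_eq_0_iff)
  moreover have "{y. t + c *\<^sub>R y \<in> N} \<in> sets lborel" by measurable
  ultimately show ?thesis by auto
qed

definition shell :: "real \<Rightarrow> real \<Rightarrow> 'a::euclidean_space set" where
  "shell a b = {y. a < norm y \<and> norm y \<le> b}"

lemma shell_borel[measurable]: "shell a b \<in> sets borel"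
  unfolding shell_def by measurable

lemma shell_scale:
  fixes \<beta> :: real
  assumes c: "c > 0"
  shows "(\<integral>\<^sup>+ y. ennreal (indicator (shell (c*a) (c*b)) y * norm (y::'a::euclidean_space) powr (-\<beta>)) \<partial>lborel)
       = ennreal (c powr (real DIM('a) - \<beta>)) *
         (\<integral>\<^sup>+ y. ennreal (indicator (shell a b) y * norm (y::'a) powr (-\<beta>)) \<partial>lborel)"
proof -
  have meas: "(\<lambda>y::'a. ennreal (indicator (shell (c*a) (c*b)) y * norm (y::'a) powr (-\<beta>))) \<in> borel_measurable borel"
    by measurable
  have "(\<integral>\<^sup>+ y. ennreal (indicator (shell (c*a) (c*b)) y * norm (y::'a) powr (-\<beta>)) \<partial>lborel)
     = ennreal (c^DIM('a)) * (\<integral>\<^sup>+ y. ennreal (indicator (shell (c*a) (c*b)) (c *\<^sub>R y) * norm (c *\<^sub>R (y::'a)) powr (-\<beta>)) \<partial>lborel)"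
    using lborel_affine_nn_integral[OF _ meas, of c 0] c by simp
  also have "(\<lambda>y::'a. ennreal (indicator (shell (c*a) (c*b)) (c *\<^sub>R y) * norm (c *\<^sub>R y) powr (-\<beta>)))
      = (\<lambda>y. ennreal (c powr (-\<beta>)) * ennreal (indicator (shell a b) y * norm (y::'a) powr (-\<beta>)))"
  proof
    fix y :: 'a
    have "indicator (shell (c*a) (c*b)) (c *\<^sub>R y) = (indicator (shell a b) y :: real)"
      using c by (simp add: shell_def indicator_def)
    moreover have "norm (c *\<^sub>R y) powr (-\<beta>) = c powr (-\<beta>) * norm (y::'a) powr (-\<beta>)"
      using c by (simp add: powr_mult)
    ultimately show "ennreal (indicator (shell (c*a) (c*b)) (c *\<^sub>R y) * norm (c *\<^sub>R y) powr (-\<beta>))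
      = ennreal (c powr (-\<beta>)) * ennreal (indicator (shell a b) y * norm (y::'a) powr (-\<beta>))"
      by (simp add: ennreal_mult[symmetric] mult.assoc mult.left_commute)
  qed
  also have "(\<integral>\<^sup>+ y. ennreal (c powr (-\<beta>)) * ennreal (indicator (shell a b) y * norm (y::'a) powr (-\<beta>)) \<partial>lborel)
      = ennreal (c powr (-\<beta>)) * (\<integral>\<^sup>+ y. ennreal (indicator (shell a b) y * norm (y::'a) powr (-\<beta>)) \<partial>lborel)"
    by (rule nn_integral_cmult[where f="\<lambda>y. ennreal (indicator (shell a b) y * norm (y::'a) powr (-\<beta>))"]) measurable
  also have "ennreal (c^DIM('a)) * (ennreal (c powr (-\<beta>)) * (\<integral>\<^sup>+ y. ennreal (indicator (shell a b) y * norm (y::'a) powr (-\<beta>)) \<partial>lborel))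
      = ennreal (c powr (real DIM('a) - \<beta>)) * (\<integral>\<^sup>+ y. ennreal (indicator (shell a b) y * norm (y::'a) powr (-\<beta>)) \<partial>lborel)"
  proof -
    have "c^DIM('a) * c powr (-\<beta>) = c powr (real DIM('a) - \<beta>)"
      using c by (simp add: powr_realpow[symmetric] powr_add[symmetric])
    then have "ennreal (c^DIM('a)) * ennreal (c powr (-\<beta>)) = ennreal (c powr (real DIM('a) - \<beta>))"
      using c by (simp add: ennreal_mult[symmetric])
    then show ?thesis by (simp add: mult.assoc[symmetric])
  qed
  finally show ?thesis .
qed

lemma shell_finite:
  assumes a: "0 < a"
  shows "(\<integral>\<^sup>+ y. ennreal (indicator (shell a b) y * norm (y::'a::euclidean_space) powr (-\<beta>)) \<partial>lborel) < \<infinity>"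
proof -
  define C where "C = a powr (-\<beta>) + b powr (-\<beta>)"
  have "(\<integral>\<^sup>+ y. ennreal (indicator (shell a b) y * norm (y::'a) powr (-\<beta>)) \<partial>lborel)
      \<le> (\<integral>\<^sup>+ y. ennreal C * indicator (cball (0::'a) b) y \<partial>lborel)"
  proof (rule nn_integral_mono)
    fix y :: 'a
    show "ennreal (indicator (shell a b) y * norm (y::'a) powr (-\<beta>)) \<le> ennreal C * indicator (cball 0 b) y"
    proof (cases "y \<in> shell a b")
      case True
      then have y: "a < norm y" "norm y \<le> b" by (auto simp: shell_def)
      have "norm (y::'a) powr (-\<beta>) \<le> C"
      proof (cases "-\<beta> \<ge> 0")
        case True
        then have "norm (y::'a) powr (-\<beta>) \<le> b powr (-\<beta>)" using y a by (intro powr_mono2) auto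
        then show ?thesis unfolding C_def using powr_ge_zero[of a "-\<beta>"] by linarith
      next
        case False
        then have "norm (y::'a) powr (-\<beta>) \<le> a powr (-\<beta>)" using y a by (intro powr_mono2') auto
        then show ?thesis unfolding C_def using powr_ge_zero[of b "-\<beta>"] by linarith
      qed
      with True y show ?thesis by (auto simp: indicator_def intro: ennreal_leI)
    qed (simp add: indicator_def)
  qed
  also have "\<dots> = ennreal C * emeasure lborel (cball (0::'a) b)"
    by (rule nn_integral_cmult_indicator) simp
  also have "\<dots> < \<infinity>" using emeasure_lborel_cball_finite[of "0::'a" b]
    by (simp add: ennreal_mult_less_top top.not_eq_extremum)
  finally show ?thesis .
qed

lemma shells_integrable:
  fixes \<beta> :: real and A :: "'a::euclidean_space set"
  assumes a: "0 < a" and c: "\<And>k. c k > 0"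
    and sm: "summable (\<lambda>k. c k powr (real DIM('a) - \<beta>))"
    and A[measurable]: "A \<in> sets borel"
    and cover: "\<And>y. y \<in> A \<Longrightarrow> \<exists>k. y \<in> shell (c k * a) (c k * b)"
  shows "integrable lborel (\<lambda>y. indicator A y * norm (y::'a) powr (-\<beta>))"
proof -
  let ?I0 = "\<integral>\<^sup>+ y. ennreal (indicator (shell a b) y * norm (y::'a) powr (-\<beta>)) \<partial>lborel"
  let ?g = "\<lambda>k y. ennreal (indicator (shell (c k * a) (c k * b)) y * norm (y::'a) powr (-\<beta>))"
  have "(\<integral>\<^sup>+ y. ennreal (norm (indicator A y * norm (y::'a) powr (-\<beta>))) \<partial>lborel)
      \<le> (\<integral>\<^sup>+ y. (\<Sum>k. ?g k y) \<partial>lborel)"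
  proof (intro nn_integral_mono)
    fix y :: 'a
    show "ennreal (norm (indicator A y * norm (y::'a) powr (-\<beta>))) \<le> (\<Sum>k. ?g k y)"
    proof (cases "y \<in> A")
      case True
      then obtain k where k: "y \<in> shell (c k * a) (c k * b)" using cover by blast
      have "ennreal (norm (indicator A y * norm (y::'a) powr (-\<beta>))) = ?g k y"
        using True k by (auto simp: indicator_def)
      also have "?g k y = sum (\<lambda>j. ?g j y) {k}" by (simp only: sum.insert finite.emptyI empty_iff not_False_eq_True sum.empty add_0_right)
      also have "\<dots> \<le> (\<Sum>j. ?g j y)" by (intro sum_le_suminf) auto
      finally show ?thesis .
    qed (simp add: indicator_def)
  qed
  also have "\<dots> = (\<Sum>k. (\<integral>\<^sup>+ y. ?g k y \<partial>lborel))"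
    by (rule nn_integral_suminf) measurable
  also have "\<dots> = (\<Sum>k. ennreal (c k powr (real DIM('a) - \<beta>)) * ?I0)"
    by (simp only: shell_scale[OF c])
  also have "\<dots> = ennreal (\<Sum>k. c k powr (real DIM('a) - \<beta>)) * ?I0"
    using sm by (simp add: suminf_ennreal2 powr_ge_zero)
  also have "\<dots> < \<infinity>"
  proof -
    have "?I0 < \<infinity>" by (rule shell_finite[OF a])
    then show ?thesis by (simp add: ennreal_mult_less_top top.not_eq_extremum)
  qed
  finally have fin: "(\<integral>\<^sup>+ y. ennreal (norm (indicator A y * norm (y::'a) powr (-\<beta>))) \<partial>lborel) < \<infinity>" .
  have "(\<lambda>y. indicator A y * norm (y::'a) powr (-\<beta>)) \<in> borel_measurable lborel" by measurable
  then show ?thesis unfolding integrable_iff_bounded using fin by simp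
qed

lemma pow_powr_swap: "x > 0 \<Longrightarrow> (x ^ k) powr p = (x powr p) ^ k"
  for x p :: real
  by (simp add: powr_realpow[symmetric] powr_powr powr_power mult.commute)

lemma near_integrable:
  assumes \<beta>: "\<beta> < real DIM('a)" and r: "r > 0"
  shows "integrable lborel (\<lambda>y::'a::euclidean_space. indicator (cball 0 r) y * norm y powr (-\<beta>))"
proof -
  define c where "c = (\<lambda>k::nat. (1/2::real) ^ k)"
  have A: "integrable lborel (\<lambda>y::'a. indicator (cball 0 r - {0}) y * norm y powr (-\<beta>))"
  proof (rule shells_integrable[where a="r/2" and b=r and c=c])
    show "0 < r / 2" using r by simp
    show "\<And>k. 0 < c k" by (simp add: c_def)
    have "(2::real) powr (- (real DIM('a) - \<beta>)) < 1"
      using \<beta> by (intro powr_less_one) auto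
    moreover have "(1/2::real) powr (real DIM('a) - \<beta>) = (2::real) powr (- (real DIM('a) - \<beta>))"
      by (simp add: powr_divide powr_minus_divide[symmetric])
    ultimately have q: "(1/2::real) powr (real DIM('a) - \<beta>) < 1" by simp
    have "summable (\<lambda>k. ((1/2::real) powr (real DIM('a) - \<beta>)) ^ k)"
      using q by (intro summable_geometric) (simp add: abs_if)
    then show "summable (\<lambda>k. c k powr (real DIM('a) - \<beta>))"
      by (simp add: c_def pow_powr_swap)
    show "cball 0 r - {0} \<in> sets borel" by simp
    fix y :: 'a assume y: "y \<in> cball 0 r - {0}"
    then have y0: "norm y > 0" "norm y \<le> r" by auto
    have "\<exists>k. \<not> (c k * r < norm y) \<and> (c (Suc k) * r < norm y)"
    proof (rule exists_least_lemma)
      show "\<not> c 0 * r < norm y" using y0 by (simp add: c_def)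
      obtain n where "(1/2::real) ^ n < norm y / r" using real_arch_pow_inv[of "norm y / r" "1/2"] y0 r by auto
      then show "\<exists>n. c n * r < norm y" using r by (auto simp: c_def field_simps)
    qed
    then obtain k where "\<not> (c k * r < norm y)" "c (Suc k) * r < norm y" by blast
    then have "y \<in> shell (c k * (r / 2)) (c k * r)"
      by (auto simp: shell_def c_def)
    then show "\<exists>k. y \<in> shell (c k * (r / 2)) (c k * r)" by blast
  qed
  have "(\<lambda>y::'a. indicator (cball 0 r - {0}) y * norm y powr (-\<beta>)) = (\<lambda>y. indicator (cball 0 r) y * norm y powr (-\<beta>))"
    by (auto simp: indicator_def)
  with A show ?thesis by simp
qed

lemma tail_integrable:
  assumes s: "s > real DIM('a)" and r: "r > 0"
  shows "integrable lborel (\<lambda>y::'a::euclidean_space. indicator {y. r < norm y} y * norm y powr (-s))"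
proof (rule shells_integrable[where a=r and b="2*r" and c="\<lambda>k. 2 ^ k"])
  show "0 < r" using r by simp
  show "\<And>k. 0 < (2::real) ^ k" by simp
  have q: "(2::real) powr (real DIM('a) - s) < 1"
    using s by (intro powr_less_one) auto
  have "summable (\<lambda>k. ((2::real) powr (real DIM('a) - s)) ^ k)"
    using q by (intro summable_geometric) (simp add: abs_if)
  then show "summable (\<lambda>k. ((2::real) ^ k) powr (real DIM('a) - s))"
    by (simp add: pow_powr_swap)
  show "{y::'a. r < norm y} \<in> sets borel" by measurable
  fix y :: 'a assume y: "y \<in> {y. r < norm y}"
  have "\<exists>k. \<not> (norm y \<le> 2 ^ k * r) \<and> (norm y \<le> 2 ^ Suc k * r)"
  proof (rule exists_least_lemma)
    show "\<not> norm y \<le> 2 ^ 0 * r" using y by simp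
    obtain n where "norm y / r < (2::real) ^ n" using real_arch_pow[of 2 "norm y / r"] by auto
    then show "\<exists>n. norm y \<le> 2 ^ n * r" using r by (auto simp: field_simps intro!: exI[of _ n])
  qed
  then obtain k where "\<not> (norm y \<le> 2 ^ k * r)" "norm y \<le> 2 ^ Suc k * r" by blast
  then have "y \<in> shell (2 ^ k * r) (2 ^ k * (2 * r))"
    by (auto simp: shell_def mult_ac)
  then show "\<exists>k. y \<in> shell (2 ^ k * r) (2 ^ k * (2 * r))" by blast
qed

lemma shift_integrable:
  fixes g :: "'a::euclidean_space \<Rightarrow> real"
  assumes g[measurable]: "g \<in> borel_measurable borel" and i: "integrable lborel g" and c: "c \<noteq> 0"
  shows "integrable lborel (\<lambda>y. g (w + c *\<^sub>R y))"
  using lborel_affine_integrable_iff[OF c g, of w] i by simp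

locale LP =
  fixes \<alpha> :: real and \<Lambda> :: "'a::euclidean_space set" and f \<eta> :: "'a \<Rightarrow> real" and x :: 'a
  assumes \<alpha>0: "0 < \<alpha>" and \<alpha>1: "\<alpha> < 1"
    and \<Lambda>c: "closed \<Lambda>" and \<Lambda>n: "\<Lambda> \<in> null_sets lebesgue"
    and fL: "f \<in> L2alpha \<alpha>" and fs: "smooth_on f (- \<Lambda>)"
    and \<eta>m: "std_mollifier \<eta>" and x\<Lambda>: "x \<notin> \<Lambda>"
begin

definition "sx = real DIM('a) + 2 * \<alpha>"
definition fb where "fb u = (if u \<in> \<Lambda> then 0 else f u)"
definition W where "W u = 1 + norm u powr sx"

lemma sx_gt: "sx > real DIM('a)" using \<alpha>0 by (simp add: sx_def)
lemma sx2_lt: "sx - 2 < real DIM('a)" using \<alpha>1 by (simp add: sx_def)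
lemma sx_pos: "sx > 0" using sx_gt by (smt (verit) of_nat_0_le_iff)

lemma cball_borel'[measurable]: "cball (c::'a) e \<in> sets borel" by simp
lemma ball_borel'[measurable]: "ball (c::'a) e \<in> sets borel" by simp

lemma W_pos: "W u > 0" by (simp add: W_def add_pos_nonneg)

lemma \<Lambda>_borel[measurable]: "\<Lambda> \<in> sets borel" using \<Lambda>c by (simp add: borel_closed)
lemma \<Lambda>_null: "\<Lambda> \<in> null_sets lborel"
  using \<Lambda>n \<Lambda>_borel by (simp add: null_sets_completion_iff)

lemma f_cont: "continuous_on (- \<Lambda>) f"
  using fs[unfolded smooth_on_def, THEN spec[of _ "[]"]] by simp

lemma fb_borel[measurable]: "fb \<in> borel_measurable borel"
proof -
  have "(\<lambda>u. if u \<in> \<Lambda> then (\<lambda>_. 0) u else f u) \<in> borel_measurable borel"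
    by (rule borel_measurable_continuous_on_if) (auto intro: f_cont continuous_on_const)
  then show ?thesis by (simp add: fb_def[abs_def])
qed

lemma W_borel[measurable]: "W \<in> borel_measurable borel"
  unfolding W_def[abs_def] by measurable

lemma fb_eq: "u \<notin> \<Lambda> \<Longrightarrow> fb u = f u" by (simp add: fb_def)

lemma fb_cont: "p \<notin> \<Lambda> \<Longrightarrow> isCont fb p"
proof -
  assume p: "p \<notin> \<Lambda>"
  have op: "open (- \<Lambda>)" using \<Lambda>c by auto
  have "continuous_on (- \<Lambda>) fb"
    using f_cont by (rule continuous_on_eq) (simp add: fb_def)
  then show ?thesis using op p continuous_on_eq_continuous_at by blast
qed

lemma fbW_integrable: "integrable lborel (\<lambda>u. \<bar>fb u\<bar> / W u)"
proof -
  have i: "integrable lebesgue (\<lambda>u. \<bar>f u\<bar> / (1 + norm u powr (real DIM('a) + 2 * \<alpha>)))"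
    using fL by (simp add: L2alpha_def)
  have "integrable lebesgue (\<lambda>u. \<bar>fb u\<bar> / W u)"
  proof (rule integrable_cong_AE_imp[OF i])
    show "(\<lambda>u. \<bar>fb u\<bar> / W u) \<in> borel_measurable lebesgue"
      by (rule measurable_completion) measurable
    show "AE u in lebesgue. \<bar>f u\<bar> / (1 + norm u powr (real DIM('a) + 2 * \<alpha>)) = \<bar>fb u\<bar> / W u"
      using AE_not_in[OF \<Lambda>n] by eventually_elim (simp add: fb_def W_def sx_def)
  qed
  then show ?thesis by (subst (asm) integrable_completion) measurable
qed

end

locale LP2 = LP +
  fixes r M F :: real
  assumes r0: "r > 0" and M0: "M \<ge> 0"
    and ball2: "cball x (2 * r) \<subseteq> - \<Lambda>"
    and loc: "\<And>w y. w \<in> cball x r \<Longrightarrow> y \<in> cball 0 r \<Longrightarrow>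
        \<bar>f (w + y) + f (w - y) - 2 * f w\<bar> \<le> M * (norm y)\<^sup>2"
    and Fb: "\<And>w. w \<in> cball x r \<Longrightarrow> \<bar>f w\<bar> \<le> F"
begin

definition "\<kappa> = 1 + (norm x + r) / r"
definition "C1 = r powr (- sx) + \<kappa> powr sx"

lemma F0: "F \<ge> 0" using Fb[of x] r0 by auto

lemma cball_ok: "w \<in> cball x r \<Longrightarrow> w \<notin> \<Lambda>"
  using ball2 r0 by (auto simp: subset_iff)

lemma kernel_bound:
  assumes w: "w \<in> cball x r" and v: "r < norm v"
  shows "norm v powr (- sx) \<le> C1 / W (w + v)"
proof -
  have \<kappa>0: "\<kappa> > 0" using r0 by (simp add: \<kappa>_def add_pos_nonneg)
  have nv: "norm v > 0" using v r0 by linarith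
  have "norm (w + v) \<le> norm w + norm v" by (rule norm_triangle_ineq)
  also have "norm w \<le> norm x + r"
    using w norm_triangle_ineq2[of w x] by (auto simp: dist_norm norm_minus_commute)
  then have "norm w + norm v \<le> norm x + r + norm v" by simp
  also have "norm x + r \<le> ((norm x + r) / r) * norm v"
  proof -
    have "(norm x + r) / r * r \<le> (norm x + r) / r * norm v"
      using v r0 by (intro mult_left_mono) auto
    then show ?thesis using r0 by simp
  qed
  finally have 1: "norm (w + v) \<le> \<kappa> * norm v" by (simp add: \<kappa>_def algebra_simps)
  have 2: "norm (w + v) powr sx \<le> (\<kappa> * norm v) powr sx"
    using 1 sx_pos by (intro powr_mono2) auto
  have 3: "(\<kappa> * norm v) powr sx * norm v powr (- sx) = \<kappa> powr sx"
    using \<kappa>0 nv by (simp add: powr_mult powr_add[symmetric])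
  have 4: "norm v powr (- sx) \<le> r powr (- sx)"
    using v r0 sx_pos by (intro powr_mono2') auto
  have "W (w + v) * norm v powr (- sx) = norm v powr (- sx) + norm (w + v) powr sx * norm v powr (- sx)"
    by (simp add: W_def algebra_simps)
  also have "\<dots> \<le> r powr (- sx) + \<kappa> powr sx"
    using 4 mult_right_mono[OF 2, of "norm v powr (- sx)"] 3 by simp
  finally have "W (w + v) * norm v powr (- sx) \<le> C1" by (simp add: C1_def)
  then show ?thesis using W_pos[of "w + v"] by (simp add: field_simps)
qed

definition Ed where "Ed w y = (fb (w + y) + fb (w - y) - 2 * fb w) / norm y powr sx"

definition G where "G w y = M * (indicator (cball 0 r) y * norm y powr (- (sx - 2)))
   + C1 * (\<bar>fb (w + y)\<bar> / W (w + y)) + C1 * (\<bar>fb (w - y)\<bar> / W (w - y))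
   + 2 * F * (indicator {y. r < norm y} y * norm y powr (- sx))"

lemma Ed_borel[measurable]: "(\<lambda>p. Ed (fst p) (snd p)) \<in> borel_measurable (lborel \<Otimes>\<^sub>M lborel)"
  unfolding Ed_def by measurable

lemma Ed_borel1[measurable]: "Ed w \<in> borel_measurable borel"
  unfolding Ed_def by measurable

lemma G_borel[measurable]: "G w \<in> borel_measurable borel"
  unfolding G_def by measurable

lemma C1_pos: "C1 > 0" using r0 by (simp add: C1_def add_pos_nonneg)

lemma G_nonneg: "G w y \<ge> 0"
  unfolding G_def using M0 C1_pos F0 W_pos
  by (intro add_nonneg_nonneg mult_nonneg_nonneg divide_nonneg_pos) (auto simp: indicator_def)

lemma Ed_bound:
  assumes w: "w \<in> cball x r"
  shows "\<bar>Ed w y\<bar> \<le> G w y"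
proof (cases "norm y \<le> r")
  case True
  show ?thesis
  proof (cases "y = 0")
    case True then show ?thesis using G_nonneg by (simp add: Ed_def)
  next
    case False
    have "dist x (w + y) \<le> dist x w + dist w (w + y)" by (rule dist_triangle)
    moreover have "dist x (w - y) \<le> dist x w + dist w (w - y)" by (rule dist_triangle)
    moreover have "dist w (w + y) = norm y" "dist w (w - y) = norm y" by (simp_all add: dist_norm)
    ultimately have wy: "w + y \<in> cball x (2 * r)" "w - y \<in> cball x (2 * r)"
      using w True by auto
    then have fbs: "fb (w + y) = f (w + y)" "fb (w - y) = f (w - y)" "fb w = f w"
      using ball2 cball_ok[OF w] by (auto simp: fb_def)
    have ny: "norm y > 0" using False by simp
    have "\<bar>Ed w y\<bar> = \<bar>f (w + y) + f (w - y) - 2 * f w\<bar> / norm y powr sx"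
      by (simp add: Ed_def fbs)
    also have "\<dots> \<le> M * (norm y)\<^sup>2 / norm y powr sx"
      using loc[OF w] True ny by (intro divide_right_mono) auto
    also have "\<dots> = M * norm y powr (- (sx - 2))"
    proof -
      have "norm y powr (- (sx - 2)) = norm y powr (2 - sx)" by simp
      also have "\<dots> = norm y powr 2 / norm y powr sx" by (rule powr_diff)
      also have "norm y powr 2 = (norm y)\<^sup>2" using ny by (simp add: powr_numeral)
      finally show ?thesis by simp
    qed
    finally have "\<bar>Ed w y\<bar> \<le> M * (indicator (cball 0 r) y * norm y powr (- (sx - 2)))"
      using True by (simp add: indicator_def)
    moreover have "0 \<le> C1 * (\<bar>fb (w + y)\<bar> / W (w + y)) + C1 * (\<bar>fb (w - y)\<bar> / W (w - y))
       + 2 * F * (indicator {y. r < norm y} y * norm y powr (- sx))"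
      using C1_pos F0 W_pos by (intro add_nonneg_nonneg mult_nonneg_nonneg divide_nonneg_pos) (auto simp: indicator_def)
    ultimately show ?thesis unfolding G_def by linarith
  qed
next
  case False
  then have v: "r < norm y" by simp
  have k1: "norm y powr (- sx) \<le> C1 / W (w + y)" by (rule kernel_bound[OF w v])
  have k2: "norm y powr (- sx) \<le> C1 / W (w - y)"
    using kernel_bound[OF w, of "- y"] v by simp
  have fw: "\<bar>fb w\<bar> \<le> F" using Fb[OF w] cball_ok[OF w] by (simp add: fb_def)
  have "\<bar>Ed w y\<bar> = \<bar>fb (w + y) + fb (w - y) - 2 * fb w\<bar> * norm y powr (- sx)"
    by (simp add: Ed_def powr_minus_divide abs_mult divide_inverse)
  also have "\<dots> \<le> (\<bar>fb (w + y)\<bar> + \<bar>fb (w - y)\<bar> + 2 * \<bar>fb w\<bar>) * norm y powr (- sx)"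
    by (intro mult_right_mono) auto
  also have "\<dots> = \<bar>fb (w + y)\<bar> * norm y powr (- sx) + \<bar>fb (w - y)\<bar> * norm y powr (- sx)
       + 2 * \<bar>fb w\<bar> * norm y powr (- sx)" by (simp add: algebra_simps)
  also have "\<dots> \<le> \<bar>fb (w + y)\<bar> * (C1 / W (w + y)) + \<bar>fb (w - y)\<bar> * (C1 / W (w - y))
       + 2 * F * norm y powr (- sx)"
    using k1 k2 fw by (intro add_mono mult_left_mono mult_right_mono) auto
  also have "\<dots> = G w y"
  proof -
    have "indicator (cball 0 r) y = (0::real)" "indicator {y. r < norm y} y = (1::real)"
      using v by (auto simp: indicator_def)
    then show ?thesis unfolding G_def by (simp add: mult_ac)
  qed
  finally show ?thesis .
qed

lemma G_integrable: "integrable lborel (G w)"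
proof -
  have i1: "integrable lborel (\<lambda>y::'a. indicator (cball 0 r) y * norm y powr (- (sx - 2)))"
    by (rule near_integrable[OF sx2_lt r0])
  have i2: "integrable lborel (\<lambda>y. \<bar>fb (w + y)\<bar> / W (w + y))"
    using shift_integrable[of "\<lambda>u. \<bar>fb u\<bar> / W u" 1 w] fbW_integrable by simp
  have i3: "integrable lborel (\<lambda>y. \<bar>fb (w - y)\<bar> / W (w - y))"
    using shift_integrable[of "\<lambda>u. \<bar>fb u\<bar> / W u" "-1" w] fbW_integrable by simp
  have i4: "integrable lborel (\<lambda>y::'a. indicator {y. r < norm y} y * norm y powr (- sx))"
    by (rule tail_integrable[OF sx_gt r0])
  show ?thesis unfolding G_def[abs_def]
    by (intro Bochner_Integration.integrable_add integrable_mult_right i1 i2 i3 i4)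
qed

lemma Ed_integrable: "w \<in> cball x r \<Longrightarrow> integrable lborel (Ed w)"
  by (rule Bochner_Integration.integrable_bound[OF G_integrable]) (use Ed_bound G_nonneg in \<open>auto\<close>)

definition "J = (\<integral>u. \<bar>fb u\<bar> / W u \<partial>lborel)"
definition "N0 = (\<integral>y. indicator (cball 0 r) y * norm (y::'a) powr (- (sx - 2)) \<partial>lborel)"
definition "T0 = (\<integral>y. indicator {y. r < norm y} y * norm (y::'a) powr (- sx) \<partial>lborel)"
definition "Bd = M * N0 + 2 * C1 * J + 2 * F * T0"

lemma G_integral: "(\<integral>y. G w y \<partial>lborel) = Bd"
proof -
  have i1: "integrable lborel (\<lambda>y::'a. indicator (cball 0 r) y * norm y powr (- (sx - 2)))"
    by (rule near_integrable[OF sx2_lt r0])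
  have i2: "integrable lborel (\<lambda>y. \<bar>fb (w + y)\<bar> / W (w + y))"
    using shift_integrable[of "\<lambda>u. \<bar>fb u\<bar> / W u" 1 w] fbW_integrable by simp
  have i3: "integrable lborel (\<lambda>y. \<bar>fb (w - y)\<bar> / W (w - y))"
    using shift_integrable[of "\<lambda>u. \<bar>fb u\<bar> / W u" "-1" w] fbW_integrable by simp
  have i4: "integrable lborel (\<lambda>y::'a. indicator {y. r < norm y} y * norm y powr (- sx))"
    by (rule tail_integrable[OF sx_gt r0])
  have e2: "(\<integral>y. \<bar>fb (w + y)\<bar> / W (w + y) \<partial>lborel) = J"
    using lborel_affine_integral[of 1 "\<lambda>u. \<bar>fb u\<bar> / W u" w] by (simp add: J_def)
  have e3: "(\<integral>y. \<bar>fb (w - y)\<bar> / W (w - y) \<partial>lborel) = J"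
    using lborel_affine_integral[of "-1" "\<lambda>u. \<bar>fb u\<bar> / W u" w] by (simp add: J_def)
  let ?a = "\<lambda>y::'a. M * (indicator (cball 0 r) y * norm y powr (- (sx - 2)))"
  let ?b = "\<lambda>y. C1 * (\<bar>fb (w + y)\<bar> / W (w + y))"
  let ?c = "\<lambda>y. C1 * (\<bar>fb (w - y)\<bar> / W (w - y))"
  let ?d = "\<lambda>y::'a. 2 * F * (indicator {y. r < norm y} y * norm y powr (- sx))"
  have ia: "integrable lborel ?a" by (intro integrable_mult_right i1)
  have ib: "integrable lborel ?b" by (intro integrable_mult_right i2)
  have ic: "integrable lborel ?c" by (intro integrable_mult_right i3)
  have id: "integrable lborel ?d" by (intro integrable_mult_right i4)
  have "(\<integral>y. G w y \<partial>lborel) = (\<integral>y. ?a y + ?b y + ?c y + ?d y \<partial>lborel)"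
    by (simp add: G_def)
  also have "\<dots> = (\<integral>y. ?a y \<partial>lborel) + (\<integral>y. ?b y \<partial>lborel) + (\<integral>y. ?c y \<partial>lborel) + (\<integral>y. ?d y \<partial>lborel)"
    using ia ib ic id by (simp add: integral_add)
  also have "\<dots> = Bd"
  proof -
    have ea: "(\<integral>y. ?a y \<partial>lborel) = M * N0" by (simp only: integral_mult_right_zero N0_def)
    have eb: "(\<integral>y. ?b y \<partial>lborel) = C1 * J" by (simp only: integral_mult_right_zero e2)
    have ec: "(\<integral>y. ?c y \<partial>lborel) = C1 * J" by (simp only: integral_mult_right_zero e3)
    have ed: "(\<integral>y. ?d y \<partial>lborel) = 2 * F * T0" by (simp only: integral_mult_right_zero T0_def)
    show ?thesis by (simp only: ea eb ec ed Bd_def)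
  qed
  finally show ?thesis .
qed

lemma Ed_abs_integral: "w \<in> cball x r \<Longrightarrow> (\<integral>y. \<bar>Ed w y\<bar> \<partial>lborel) \<le> Bd"
  using integral_mono[of lborel "\<lambda>y. \<bar>Ed w y\<bar>" "G w"] Ed_integrable G_integrable Ed_bound G_integral
  by auto

end

lemma seq_cont_ball:
  fixes g :: "'a::euclidean_space \<Rightarrow> real"
  assumes r: "r > 0"
    and seq: "\<And>u. (\<And>i. u i \<in> cball x r) \<Longrightarrow> u \<longlonglongrightarrow> x \<Longrightarrow> (\<lambda>i. g (u i)) \<longlonglongrightarrow> g x"
  shows "isCont g x"
proof (rule continuous_at_sequentiallyI)
  fix u assume u: "u \<longlonglongrightarrow> x"
  define u' where "u' i = (if u i \<in> cball x r then u i else x)" for i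
  have ev: "eventually (\<lambda>i. u i \<in> cball x r) sequentially"
    using tendstoD[OF u r] by eventually_elim (auto simp: dist_commute)
  have "eventually (\<lambda>i. u i = u' i) sequentially"
    using ev by eventually_elim (simp add: u'_def)
  with u have u': "u' \<longlonglongrightarrow> x"
    by (rule Lim_transform_eventually)
  have "(\<lambda>i. g (u' i)) \<longlonglongrightarrow> g x"
    by (rule seq[OF _ u']) (use r in \<open>auto simp: u'_def\<close>)
  moreover have "eventually (\<lambda>i. g (u' i) = g (u i)) sequentially"
    using ev by eventually_elim (simp add: u'_def)
  ultimately show "(\<lambda>i. g (u i)) \<longlonglongrightarrow> g x"
    by (rule Lim_transform_eventually)
qed

context LP2 begin

definition Hk where "Hk y = indicator {y. r < norm y} y * norm (y::'a) powr (- sx)"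

lemma Hk_borel[measurable]: "Hk \<in> borel_measurable borel"
  unfolding Hk_def[abs_def] by measurable

lemma Hk_minus[simp]: "Hk (- y) = Hk y" by (simp add: Hk_def indicator_def)

lemma Hk_nonneg: "Hk y \<ge> 0" by (simp add: Hk_def)

lemma Hk_integrable: "integrable lborel Hk"
  unfolding Hk_def[abs_def] by (rule tail_integrable[OF sx_gt r0])

lemma T0_Hk: "T0 = (\<integral>y. Hk y \<partial>lborel)" by (simp add: T0_def Hk_def)

lemma Ed_near:
  assumes w: "w \<in> cball x r" and y: "norm y \<le> r"
  shows "\<bar>Ed w y\<bar> \<le> M * norm y powr (- (sx - 2))"
proof (cases "y = 0")
  case True then show ?thesis by (simp add: Ed_def)
next
  case False
  have "dist x (w + y) \<le> dist x w + dist w (w + y)" by (rule dist_triangle)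
  moreover have "dist x (w - y) \<le> dist x w + dist w (w - y)" by (rule dist_triangle)
  moreover have "dist w (w + y) = norm y" "dist w (w - y) = norm y" by (simp_all add: dist_norm)
  ultimately have wy: "w + y \<in> cball x (2 * r)" "w - y \<in> cball x (2 * r)"
    using w y by auto
  then have fbs: "fb (w + y) = f (w + y)" "fb (w - y) = f (w - y)" "fb w = f w"
    using ball2 cball_ok[OF w] by (auto simp: fb_def)
  have ny: "norm y > 0" using False by simp
  have "\<bar>Ed w y\<bar> = \<bar>f (w + y) + f (w - y) - 2 * f w\<bar> / norm y powr sx"
    by (simp add: Ed_def fbs)
  also have "\<dots> \<le> M * (norm y)\<^sup>2 / norm y powr sx"
    using loc[OF w] y ny by (intro divide_right_mono) auto
  also have "\<dots> = M * norm y powr (- (sx - 2))"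
  proof -
    have "norm y powr (- (sx - 2)) = norm y powr (2 - sx)" by simp
    also have "\<dots> = norm y powr 2 / norm y powr sx" by (rule powr_diff)
    also have "norm y powr 2 = (norm y)\<^sup>2" using ny by (simp add: powr_numeral)
    finally show ?thesis by simp
  qed
  finally show ?thesis .
qed

definition "Phi w = (\<integral>y. Ed w y \<partial>lborel)"
definition "Nn w = (\<integral>y. Ed w y * indicator (cball 0 r) y \<partial>lborel)"
definition "Q w = (\<integral>u. fb u * Hk (u - w) \<partial>lborel)"

lemma Q_bound:
  assumes w: "w \<in> cball x r"
  shows "\<bar>fb u * Hk (u - w)\<bar> \<le> C1 * (\<bar>fb u\<bar> / W u)"
proof (cases "r < norm (u - w)")
  case True
  have "Hk (u - w) = norm (u - w) powr (- sx)" using True by (simp add: Hk_def)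
  also have "\<dots> \<le> C1 / W (w + (u - w))" by (rule kernel_bound[OF w True])
  finally have "Hk (u - w) \<le> C1 / W u" by simp
  then have "\<bar>fb u\<bar> * Hk (u - w) \<le> \<bar>fb u\<bar> * (C1 / W u)" by (intro mult_left_mono) auto
  moreover have "\<bar>fb u * Hk (u - w)\<bar> = \<bar>fb u\<bar> * Hk (u - w)"
    using Hk_nonneg[of "u - w"] by (simp add: abs_mult)
  moreover have "\<bar>fb u\<bar> * (C1 / W u) = C1 * (\<bar>fb u\<bar> / W u)" by simp
  ultimately show ?thesis by (simp only:)
next
  case False
  then show ?thesis using C1_pos W_pos[of u] by (simp add: Hk_def)
qed

lemma near_part_integrable:
  assumes w: "w \<in> cball x r"
  shows "integrable lborel (\<lambda>y. Ed w y * indicator (cball 0 r) y)"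
proof (rule Bochner_Integration.integrable_bound)
  show "integrable lborel (\<lambda>y::'a. M * (indicator (cball 0 r) y * norm y powr (- (sx - 2))))"
    by (intro integrable_mult_right near_integrable[OF sx2_lt r0])
  show "(\<lambda>y. Ed w y * indicator (cball 0 r) y) \<in> borel_measurable lborel" by measurable
  show "AE y in lborel. norm (Ed w y * indicator (cball 0 r) y)
      \<le> norm (M * (indicator (cball 0 r) y * norm y powr (- (sx - 2))))"
  proof (intro AE_I2)
    fix y :: 'a
    show "norm (Ed w y * indicator (cball 0 r) y) \<le> norm (M * (indicator (cball 0 r) y * norm y powr (- (sx - 2))))"
    proof (cases "norm y \<le> r")
      case True
      then show ?thesis using Ed_near[OF w True] M0 by (simp add: indicator_def abs_mult)
    qed (simp add: indicator_def)
  qed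
qed

lemma Qint_integrable:
  assumes w: "w \<in> cball x r"
  shows "integrable lborel (\<lambda>u. fb u * Hk (u - w))"
proof (rule Bochner_Integration.integrable_bound)
  show "integrable lborel (\<lambda>u. C1 * (\<bar>fb u\<bar> / W u))"
    by (intro integrable_mult_right fbW_integrable)
  show "(\<lambda>u. fb u * Hk (u - w)) \<in> borel_measurable lborel" by measurable
  show "AE u in lborel. norm (fb u * Hk (u - w)) \<le> norm (C1 * (\<bar>fb u\<bar> / W u))"
  proof (intro AE_I2)
    fix u
    have "norm (C1 * (\<bar>fb u\<bar> / W u)) = C1 * (\<bar>fb u\<bar> / W u)"
      using C1_pos W_pos[of u] by (simp add: abs_mult)
    then show "norm (fb u * Hk (u - w)) \<le> norm (C1 * (\<bar>fb u\<bar> / W u))"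
      using Q_bound[OF w, of u] by simp
  qed
qed

lemma P_eq_Q:
  assumes w: "w \<in> cball x r"
  shows "(\<integral>y. fb (w + y) * Hk y \<partial>lborel) = Q w"
    and "(\<integral>y. fb (w - y) * Hk y \<partial>lborel) = Q w"
    and "integrable lborel (\<lambda>y. fb (w + y) * Hk y)"
    and "integrable lborel (\<lambda>y. fb (w - y) * Hk y)"
proof -
  have g[measurable]: "(\<lambda>u. fb u * Hk (u - w)) \<in> borel_measurable borel" by measurable
  show "(\<integral>y. fb (w + y) * Hk y \<partial>lborel) = Q w"
    using lborel_affine_integral[of 1 "\<lambda>u. fb u * Hk (u - w)" w] by (simp add: Q_def)
  show "(\<integral>y. fb (w - y) * Hk y \<partial>lborel) = Q w"
    using lborel_affine_integral[of "-1" "\<lambda>u. fb u * Hk (u - w)" w] by (simp add: Q_def)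
  show "integrable lborel (\<lambda>y. fb (w + y) * Hk y)"
    using shift_integrable[OF g Qint_integrable[OF w], of 1 w] by simp
  show "integrable lborel (\<lambda>y. fb (w - y) * Hk y)"
    using shift_integrable[OF g Qint_integrable[OF w], of "-1" w] by simp
qed

lemma Phi_decomp:
  assumes w: "w \<in> cball x r"
  shows "Phi w = Nn w + 2 * Q w - 2 * fb w * T0"
proof -
  have pt: "Ed w y = Ed w y * indicator (cball 0 r) y + (fb (w + y) * Hk y + fb (w - y) * Hk y
              - (2 * fb w) * Hk y)" for y
  proof (cases "norm y \<le> r")
    case True then show ?thesis by (simp add: Hk_def indicator_def)
  next
    case False
    then show ?thesis
      by (simp add: Hk_def indicator_def Ed_def powr_minus_divide algebra_simps add_divide_distrib diff_divide_distrib)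
  qed
  have i1: "integrable lborel (\<lambda>y. Ed w y * indicator (cball 0 r) y)" by (rule near_part_integrable[OF w])
  note i2 = P_eq_Q(3)[OF w] and i3 = P_eq_Q(4)[OF w]
  have i4: "integrable lborel (\<lambda>y. (2 * fb w) * Hk y)" by (intro integrable_mult_right Hk_integrable)
  have "Phi w = (\<integral>y. Ed w y * indicator (cball 0 r) y + (fb (w + y) * Hk y + fb (w - y) * Hk y
              - (2 * fb w) * Hk y) \<partial>lborel)"
    unfolding Phi_def by (intro arg_cong[where f="integral\<^sup>L lborel"] ext pt)
  also have "\<dots> = Nn w + (Q w + Q w - 2 * fb w * T0)"
    using i1 i2 i3 i4 P_eq_Q[OF w]
    by (simp add: Nn_def integral_add integral_diff Bochner_Integration.integrable_add T0_Hk)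
  finally show ?thesis by simp
qed

lemma null_sphere: "sphere (c::'a) e \<in> null_sets lborel"
proof -
  have "sphere c e \<in> null_sets lebesgue"
    using negligible_sphere[of c e] by (simp add: negligible_iff_null_sets)
  then show ?thesis by (subst (asm) null_sets_completion_iff) auto
qed

lemma Nn_tendsto:
  assumes u: "\<And>i. u i \<in> cball x r" and lim: "u \<longlonglongrightarrow> x"
  shows "(\<lambda>i. Nn (u i)) \<longlonglongrightarrow> Nn x"
  unfolding Nn_def
proof (rule integral_dominated_convergence[where w="\<lambda>y. M * (indicator (cball 0 r) y * norm y powr (- (sx - 2)))"])
  show "integrable lborel (\<lambda>y::'a. M * (indicator (cball 0 r) y * norm y powr (- (sx - 2))))"
    by (intro integrable_mult_right near_integrable[OF sx2_lt r0])
  show "(\<lambda>y. Ed x y * indicator (cball 0 r) y) \<in> borel_measurable lborel" by measurable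
  show "\<And>i. (\<lambda>y. Ed (u i) y * indicator (cball 0 r) y) \<in> borel_measurable lborel" by measurable
  show "AE y in lborel. (\<lambda>i. Ed (u i) y * indicator (cball 0 r) y) \<longlonglongrightarrow> Ed x y * indicator (cball 0 r) y"
  proof (intro AE_I2)
    fix y :: 'a
    show "(\<lambda>i. Ed (u i) y * indicator (cball 0 r) y) \<longlonglongrightarrow> Ed x y * indicator (cball 0 r) y"
    proof (cases "norm y \<le> r")
      case True
      have in1: "x + y \<notin> \<Lambda>" "x - y \<notin> \<Lambda>" "x \<notin> \<Lambda>"
        using ball2 True r0 by (auto simp: subset_iff dist_norm)
      have "(\<lambda>i. fb (u i + y)) \<longlonglongrightarrow> fb (x + y)"
        by (intro isCont_tendsto_compose[OF fb_cont[OF in1(1)]] tendsto_intros lim)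
      moreover have "(\<lambda>i. fb (u i - y)) \<longlonglongrightarrow> fb (x - y)"
        by (intro isCont_tendsto_compose[OF fb_cont[OF in1(2)]] tendsto_intros lim)
      moreover have "(\<lambda>i. fb (u i)) \<longlonglongrightarrow> fb x"
        by (intro isCont_tendsto_compose[OF fb_cont[OF in1(3)]] lim)
      ultimately have "(\<lambda>i. (fb (u i + y) + fb (u i - y) - 2 * fb (u i)) * inverse (norm y powr sx) * indicator (cball 0 r) y)
          \<longlonglongrightarrow> (fb (x + y) + fb (x - y) - 2 * fb x) * inverse (norm y powr sx) * indicator (cball 0 r) y"
        by (intro tendsto_intros)
      then show ?thesis by (simp add: Ed_def divide_inverse)
    next
      case False
      then show ?thesis by (simp add: indicator_def)
    qed
  qed
  fix i
  show "AE y in lborel. norm (Ed (u i) y * indicator (cball 0 r) y)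
      \<le> M * (indicator (cball 0 r) y * norm y powr (- (sx - 2)))"
  proof (intro AE_I2)
    fix y :: 'a
    show "norm (Ed (u i) y * indicator (cball 0 r) y) \<le> M * (indicator (cball 0 r) y * norm y powr (- (sx - 2)))"
    proof (cases "norm y \<le> r")
      case True
      then show ?thesis using Ed_near[OF u True] by (simp add: indicator_def)
    qed (simp add: indicator_def)
  qed
qed

lemma nhds_imp_at: "eventually P (nhds a) \<Longrightarrow> eventually P (at a)"
  unfolding eventually_at_filter by (auto elim!: eventually_mono)

lemma Hk_cont: "norm v \<noteq> r \<Longrightarrow> isCont Hk v"
proof -
  assume v: "norm v \<noteq> r"
  show "isCont Hk v"
  proof (cases "norm v < r")
    case True
    have "eventually (\<lambda>z. z \<in> ball 0 r) (nhds v)"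
      using True by (intro eventually_nhds_in_open) auto
    then have "eventually (\<lambda>z. 0 = Hk z) (nhds v)"
      by eventually_elim (auto simp: Hk_def)
    then have ev: "eventually (\<lambda>z. 0 = Hk z) (at v)" by (rule nhds_imp_at)
    have "((\<lambda>z. 0::real) \<longlongrightarrow> 0) (at v)" by simp
    then have "(Hk \<longlongrightarrow> 0) (at v)" using ev by (rule Lim_transform_eventually)
    moreover have "Hk v = 0" using True by (simp add: Hk_def)
    ultimately show ?thesis by (simp add: isCont_def)
  next
    case False
    with v have rv: "r < norm v" by simp
    have ev: "eventually (\<lambda>z. norm z powr (- sx) = Hk z) (nhds v)"
    proof -
      have "open {z::'a. r < norm z}" by (intro open_Collect_less continuous_intros)
      then have "eventually (\<lambda>z. z \<in> {z::'a. r < norm z}) (nhds v)"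
        using rv by (intro eventually_nhds_in_open) auto
      then show ?thesis by eventually_elim (simp add: Hk_def)
    qed
    have "isCont (\<lambda>z::'a. norm z powr (- sx)) v"
      using rv r0 by (intro continuous_intros) auto
    then have "((\<lambda>z::'a. norm z powr (- sx)) \<longlongrightarrow> norm v powr (- sx)) (at v)"
      by (simp add: isCont_def)
    then have "(Hk \<longlongrightarrow> norm v powr (- sx)) (at v)"
      using nhds_imp_at[OF ev] by (rule Lim_transform_eventually)
    moreover have "Hk v = norm v powr (- sx)" using rv by (simp add: Hk_def)
    ultimately show ?thesis by (simp add: isCont_def)
  qed
qed

end

lemma lebesgue_measurable_AE:
  fixes f g :: "'a::euclidean_space \<Rightarrow> real"
  assumes g: "g \<in> borel_measurable lebesgue" and N: "N \<in> null_sets lebesgue"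
    and eq: "\<And>x. x \<notin> N \<Longrightarrow> f x = g x"
  shows "f \<in> borel_measurable lebesgue"
proof (rule measurableI)
  fix B :: "real set" assume B: "B \<in> sets borel"
  have "f -` B \<inter> space lebesgue = ((g -` B \<inter> space lebesgue) - N) \<union> (f -` B \<inter> N)"
    using eq by auto
  moreover have "g -` B \<inter> space lebesgue \<in> sets lebesgue" using g B by (rule measurable_sets)
  moreover have "f -` B \<inter> N \<in> null_sets lebesgue"
    using N by (rule completion.complete2[rotated]) auto
  moreover have "N \<in> sets lebesgue" using N by auto
  ultimately show "f -` B \<inter> space lebesgue \<in> sets lebesgue"
    by (metis sets.Diff sets.Un null_setsD2)
qed auto

lemma integral_lebesgue_AE:
  fixes f g :: "'a::euclidean_space \<Rightarrow> real"
  assumes g[measurable]: "g \<in> borel_measurable borel" and N: "N \<in> null_sets lborel"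
    and eq: "\<And>x. x \<notin> N \<Longrightarrow> f x = g x"
  shows "integral\<^sup>L lebesgue f = integral\<^sup>L lborel g"
proof -
  have Nl: "N \<in> null_sets lebesgue" using N by (subst null_sets_completion_iff) auto
  have gl: "g \<in> borel_measurable lebesgue" by (rule measurable_completion) simp
  have fl: "f \<in> borel_measurable lebesgue" by (rule lebesgue_measurable_AE[OF gl Nl eq])
  have "integral\<^sup>L lebesgue f = integral\<^sup>L lebesgue g"
    using AE_not_in[OF Nl] by (intro integral_cong_AE fl gl) (auto elim: eventually_mono simp: eq)
  also have "\<dots> = integral\<^sup>L lborel g" by (rule integral_completion) simp
  finally show ?thesis .
qed

context LP2 begin

lemma Q_tendsto:
  assumes u: "\<And>i. u i \<in> cball x r" and lim: "u \<longlonglongrightarrow> x"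
  shows "(\<lambda>i. Q (u i)) \<longlonglongrightarrow> Q x"
  unfolding Q_def
proof (rule integral_dominated_convergence[where w="\<lambda>v. C1 * (\<bar>fb v\<bar> / W v)"])
  show "integrable lborel (\<lambda>v. C1 * (\<bar>fb v\<bar> / W v))"
    by (intro integrable_mult_right fbW_integrable)
  show "(\<lambda>v. fb v * Hk (v - x)) \<in> borel_measurable lborel" by measurable
  show "\<And>i. (\<lambda>v. fb v * Hk (v - u i)) \<in> borel_measurable lborel" by measurable
  show "AE v in lborel. (\<lambda>i. fb v * Hk (v - u i)) \<longlonglongrightarrow> fb v * Hk (v - x)"
    using AE_not_in[OF null_sphere[of x r]]
  proof eventually_elim
    fix v assume "v \<notin> sphere x r"
    then have "norm (v - x) \<noteq> r" by (simp add: dist_norm norm_minus_commute)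
    then have "(\<lambda>i. Hk (v - u i)) \<longlonglongrightarrow> Hk (v - x)"
      by (intro isCont_tendsto_compose[OF Hk_cont] tendsto_intros lim)
    then show "(\<lambda>i. fb v * Hk (v - u i)) \<longlonglongrightarrow> fb v * Hk (v - x)"
      by (intro tendsto_intros)
  qed
  fix i
  show "AE v in lborel. norm (fb v * Hk (v - u i)) \<le> C1 * (\<bar>fb v\<bar> / W v)"
    using Q_bound[OF u] by (intro AE_I2) simp
qed

lemma Phi_cont: "isCont Phi x"
proof (rule seq_cont_ball[OF r0])
  fix u assume u: "\<And>i. u i \<in> cball x r" and lim: "u \<longlonglongrightarrow> x"
  have xin: "x \<in> cball x r" using r0 by simp
  have "(\<lambda>i. Nn (u i) + 2 * Q (u i) - 2 * fb (u i) * T0) \<longlonglongrightarrow> Nn x + 2 * Q x - 2 * fb x * T0"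
    by (intro tendsto_intros Nn_tendsto[OF u lim] Q_tendsto[OF u lim]
        isCont_tendsto_compose[OF fb_cont[OF x\<Lambda>] lim])
  then show "(\<lambda>i. Phi (u i)) \<longlonglongrightarrow> Phi x"
    using Phi_decomp[OF u] Phi_decomp[OF xin] by simp
qed

lemma Phi_borel[measurable]: "Phi \<in> borel_measurable borel"
proof -
  have "(\<lambda>w. \<integral>y. Ed w y \<partial>lborel) \<in> borel_measurable lborel"
    using Ed_borel by (intro lborel.borel_measurable_lebesgue_integral) (simp add: case_prod_beta')
  then show ?thesis by (simp add: Phi_def[abs_def])
qed

lemma Phi_bound: "w \<in> cball x r \<Longrightarrow> \<bar>Phi w\<bar> \<le> Bd"
  unfolding Phi_def
  using integral_abs_bound[of lborel "Ed w"] Ed_abs_integral[of w] by linarith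

lemma frac_lap_f: "frac_lap \<alpha> f x = - frac_const DIM('a) \<alpha> * Phi x"
proof -
  let ?N = "{y. x + 1 *\<^sub>R y \<in> \<Lambda>} \<union> {y. x + (-1) *\<^sub>R y \<in> \<Lambda>}"
  have N: "?N \<in> null_sets lborel"
    using null_affine[OF _ \<Lambda>_null, of 1 x] null_affine[OF _ \<Lambda>_null, of "-1" x] by auto
  have "(\<integral>y. (f (x + y) + f (x - y) - 2 * f x) / norm y powr (real DIM('a) + 2 * \<alpha>) \<partial>lebesgue)
      = integral\<^sup>L lborel (Ed x)"
  proof (rule integral_lebesgue_AE[OF _ N])
    show "Ed x \<in> borel_measurable borel" by measurable
    fix y assume "y \<notin> ?N"
    then show "(f (x + y) + f (x - y) - 2 * f x) / norm y powr (real DIM('a) + 2 * \<alpha>) = Ed x y"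
      using x\<Lambda> by (simp add: Ed_def fb_def sx_def)
  qed
  then show ?thesis by (simp add: frac_lap_def Phi_def)
qed

end

context LP begin

lemma \<eta>_cont: "continuous_on UNIV \<eta>"
  using \<eta>m unfolding std_mollifier_def smooth_on_def
  by (metis empty_set empty_subsetI iter_pderiv.simps(1))

lemma \<eta>_borel[measurable]: "\<eta> \<in> borel_measurable borel"
  by (rule borel_measurable_continuous_onI[OF \<eta>_cont])

lemma \<eta>_nonneg: "\<eta> y \<ge> 0" using \<eta>m by (simp add: std_mollifier_def)

lemma \<eta>_supp: "\<eta> y \<noteq> 0 \<Longrightarrow> norm y < 1"
  using \<eta>m closure_subset[of "{x. \<eta> x \<noteq> 0}"] unfolding std_mollifier_def by (auto simp: subset_iff)

lemma \<eta>_int_leb: "integral\<^sup>L lebesgue \<eta> = 1" using \<eta>m by (simp add: std_mollifier_def)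

lemma \<eta>_integrable: "integrable lborel \<eta>"
proof -
  have "integrable lebesgue \<eta>"
    using \<eta>_int_leb not_integrable_integral_eq by fastforce
  then show ?thesis by (subst (asm) integrable_completion) simp
qed

lemma \<eta>_int: "integral\<^sup>L lborel \<eta> = 1"
  using \<eta>_int_leb by (subst (asm) integral_completion) simp

definition "\<eta>e \<epsilon> z = (1 / \<epsilon> ^ DIM('a)) * \<eta> ((1 / \<epsilon>) *\<^sub>R z)"

lemma \<eta>e_borel[measurable]: "(\<lambda>z. \<eta>e \<epsilon> z) \<in> borel_measurable borel"
  unfolding \<eta>e_def by measurable

lemma \<eta>e_nonneg: "\<epsilon> > 0 \<Longrightarrow> \<eta>e \<epsilon> z \<ge> 0"
  unfolding \<eta>e_def using \<eta>_nonneg by simp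

lemma \<eta>e_supp: "\<epsilon> > 0 \<Longrightarrow> \<eta>e \<epsilon> z \<noteq> 0 \<Longrightarrow> norm z < \<epsilon>"
  unfolding \<eta>e_def using \<eta>_supp[of "(1 / \<epsilon>) *\<^sub>R z"] by (auto simp: field_simps)

lemma \<eta>e_integrable: "\<epsilon> > 0 \<Longrightarrow> integrable lborel (\<eta>e \<epsilon>)"
  unfolding \<eta>e_def[abs_def]
  using shift_integrable[OF \<eta>_borel \<eta>_integrable, of "1 / \<epsilon>" 0]
  by (intro integrable_mult_right) simp

lemma \<eta>e_int: "\<epsilon> > 0 \<Longrightarrow> integral\<^sup>L lborel (\<eta>e \<epsilon>) = 1"
proof -
  assume e: "\<epsilon> > 0"
  have "(\<integral>z. \<eta> (0 + (1 / \<epsilon>) *\<^sub>R z) \<partial>lborel) = integral\<^sup>L lborel \<eta> / \<bar>1 / \<epsilon>\<bar> ^ DIM('a)"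
    using e by (intro lborel_affine_integral) auto
  then have "(\<integral>z. \<eta> ((1 / \<epsilon>) *\<^sub>R z) \<partial>lborel) = \<epsilon> ^ DIM('a)"
    using e \<eta>_int by (simp add: power_one_over)
  then show ?thesis using e unfolding \<eta>e_def[abs_def] by simp
qed

end

locale LP3 = LP2 +
  fixes H\<eta> :: real
  assumes \<eta>b: "\<And>y. \<eta> y \<le> H\<eta>"
begin

lemma H\<eta>_nonneg: "H\<eta> \<ge> 0" using \<eta>b[of 0] \<eta>_nonneg[of 0] by simp

lemma \<eta>e_le: "\<epsilon> > 0 \<Longrightarrow> \<eta>e \<epsilon> z \<le> H\<eta> / \<epsilon> ^ DIM('a)"
  unfolding \<eta>e_def using \<eta>b[of "(1 / \<epsilon>) *\<^sub>R z"] by (simp add: divide_right_mono)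

definition "mfb \<epsilon> u = (\<integral>z. fb (u - z) * \<eta>e \<epsilon> z \<partial>lborel)"

lemma loc_int:
  assumes e: "\<epsilon> > 0"
  shows "integrable lborel (\<lambda>z. fb (v - z) * \<eta>e \<epsilon> z)"
proof (rule Bochner_Integration.integrable_bound)
  define K where "K = H\<eta> / \<epsilon> ^ DIM('a) * (1 + (norm v + \<epsilon>) powr sx)"
  show "integrable lborel (\<lambda>z. K * (\<bar>fb (v - z)\<bar> / W (v - z)))"
    using shift_integrable[of "\<lambda>u. \<bar>fb u\<bar> / W u" "-1" v] fbW_integrable
    by (intro integrable_mult_right) simp
  show "(\<lambda>z. fb (v - z) * \<eta>e \<epsilon> z) \<in> borel_measurable lborel" by measurable
  show "AE z in lborel. norm (fb (v - z) * \<eta>e \<epsilon> z) \<le> norm (K * (\<bar>fb (v - z)\<bar> / W (v - z)))"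
  proof (intro AE_I2)
    fix z
    have K0: "K \<ge> 0" unfolding K_def using H\<eta>_nonneg e by simp
    have rhs: "norm (K * (\<bar>fb (v - z)\<bar> / W (v - z))) = K * (\<bar>fb (v - z)\<bar> / W (v - z))"
      using K0 W_pos[of "v - z"] by (simp add: abs_mult)
    show "norm (fb (v - z) * \<eta>e \<epsilon> z) \<le> norm (K * (\<bar>fb (v - z)\<bar> / W (v - z)))"
    proof (cases "\<eta>e \<epsilon> z = 0")
      case True then show ?thesis using rhs K0 W_pos[of "v - z"] by simp
    next
      case False
      then have z: "norm z < \<epsilon>" by (rule \<eta>e_supp[OF e])
      have "norm (v - z) \<le> norm v + \<epsilon>" using z norm_triangle_ineq4[of v z] by simp
      then have "norm (v - z) powr sx \<le> (norm v + \<epsilon>) powr sx" using sx_pos by (intro powr_mono2) auto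
      then have Wle: "W (v - z) \<le> 1 + (norm v + \<epsilon>) powr sx" by (simp add: W_def)
      have "\<bar>fb (v - z)\<bar> = W (v - z) * (\<bar>fb (v - z)\<bar> / W (v - z))" using W_pos[of "v - z"] by simp
      also have "\<dots> \<le> (1 + (norm v + \<epsilon>) powr sx) * (\<bar>fb (v - z)\<bar> / W (v - z))"
        using Wle W_pos[of "v - z"] by (intro mult_right_mono) auto
      finally have 1: "\<bar>fb (v - z)\<bar> \<le> (1 + (norm v + \<epsilon>) powr sx) * (\<bar>fb (v - z)\<bar> / W (v - z))" .
      have 2: "\<eta>e \<epsilon> z \<le> H\<eta> / \<epsilon> ^ DIM('a)" by (rule \<eta>e_le[OF e])
      have "norm (fb (v - z) * \<eta>e \<epsilon> z) = \<bar>fb (v - z)\<bar> * \<eta>e \<epsilon> z"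
        using \<eta>e_nonneg[OF e] by (simp add: abs_mult)
      also have "\<dots> \<le> ((1 + (norm v + \<epsilon>) powr sx) * (\<bar>fb (v - z)\<bar> / W (v - z))) * (H\<eta> / \<epsilon> ^ DIM('a))"
        using 1 2 \<eta>e_nonneg[OF e, of z] by (intro mult_mono) auto
      also have "\<dots> = K * (\<bar>fb (v - z)\<bar> / W (v - z))" by (simp add: K_def mult_ac)
      finally show ?thesis using rhs by simp
    qed
  qed
qed

lemma mollify_eq: "\<epsilon> > 0 \<Longrightarrow> mollify \<eta> \<epsilon> f u = mfb \<epsilon> u"
proof -
  assume e: "\<epsilon> > 0"
  have N: "{z. u + (-1) *\<^sub>R z \<in> \<Lambda>} \<in> null_sets lborel"
    using null_affine[OF _ \<Lambda>_null, of "-1" u] by simp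
  show ?thesis
    unfolding mollify_def mfb_def
  proof (rule integral_lebesgue_AE[OF _ N])
    show "(\<lambda>z. fb (u - z) * \<eta>e \<epsilon> z) \<in> borel_measurable borel" by measurable
    fix z assume "z \<notin> {z. u + (-1) *\<^sub>R z \<in> \<Lambda>}"
    then show "f (u - z) * (1 / \<epsilon> ^ DIM('a) * \<eta> ((1 / \<epsilon>) *\<^sub>R z)) = fb (u - z) * \<eta>e \<epsilon> z"
      by (simp add: fb_def \<eta>e_def)
  qed
qed

lemma mfb_borel[measurable]: "mfb \<epsilon> \<in> borel_measurable borel"
proof -
  have "(\<lambda>u. \<integral>z. fb (u - z) * \<eta>e \<epsilon> z \<partial>lborel) \<in> borel_measurable lborel"
    by (intro lborel.borel_measurable_lebesgue_integral) measurable
  then show ?thesis by (simp add: mfb_def[abs_def])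
qed

lemma inner_z:
  assumes e: "\<epsilon> > 0"
  shows "(\<integral>z. \<eta>e \<epsilon> z * Ed (x - z) y \<partial>lborel)
       = (mfb \<epsilon> (x + y) + mfb \<epsilon> (x - y) - 2 * mfb \<epsilon> x) / norm y powr sx"
proof -
  have eq: "\<eta>e \<epsilon> z * Ed (x - z) y = (fb (x + y - z) * \<eta>e \<epsilon> z + fb (x - y - z) * \<eta>e \<epsilon> z
       - 2 * (fb (x - z) * \<eta>e \<epsilon> z)) / norm y powr sx" for z
    by (simp add: Ed_def algebra_simps add_divide_distrib diff_divide_distrib)
  have i1: "integrable lborel (\<lambda>z. fb (x + y - z) * \<eta>e \<epsilon> z)" by (rule loc_int[OF e])
  have i2: "integrable lborel (\<lambda>z. fb (x - y - z) * \<eta>e \<epsilon> z)" by (rule loc_int[OF e])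
  have i3: "integrable lborel (\<lambda>z. fb (x - z) * \<eta>e \<epsilon> z)" by (rule loc_int[OF e])
  have "(\<integral>z. \<eta>e \<epsilon> z * Ed (x - z) y \<partial>lborel)
      = (\<integral>z. (fb (x + y - z) * \<eta>e \<epsilon> z + fb (x - y - z) * \<eta>e \<epsilon> z
       - 2 * (fb (x - z) * \<eta>e \<epsilon> z)) / norm y powr sx \<partial>lborel)"
    by (simp only: eq)
  also have "\<dots> = ((\<integral>z. fb (x + y - z) * \<eta>e \<epsilon> z \<partial>lborel) + (\<integral>z. fb (x - y - z) * \<eta>e \<epsilon> z \<partial>lborel)
       - 2 * (\<integral>z. fb (x - z) * \<eta>e \<epsilon> z \<partial>lborel)) / norm y powr sx"
    using i1 i2 i3
    by (simp add: integral_add integral_diff Bochner_Integration.integrable_add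
         integrable_mult_right)
  finally show ?thesis by (simp add: mfb_def)
qed

end

context LP3 begin

lemma Bd_nonneg: "Bd \<ge> 0"
proof -
  have "0 \<le> (\<integral>y. \<bar>Ed x y\<bar> \<partial>lborel)" by (rule integral_nonneg_AE) auto
  also have "\<dots> \<le> Bd" using Ed_abs_integral[of x] r0 by simp
  finally show ?thesis .
qed

lemma H_integrable:
  assumes e: "\<epsilon> > 0" "\<epsilon> \<le> r"
  shows "integrable (lborel \<Otimes>\<^sub>M lborel) (\<lambda>p. \<eta>e \<epsilon> (fst p) * Ed (x - fst p) (snd p))"
proof (rule lborel_pair.Fubini_integrable)
  show "(\<lambda>p. \<eta>e \<epsilon> (fst p) * Ed (x - fst p) (snd p)) \<in> borel_measurable (lborel \<Otimes>\<^sub>M lborel)"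
    unfolding Ed_def by measurable
  have zin: "x - z \<in> cball x r" if "\<eta>e \<epsilon> z \<noteq> 0" for z
    using \<eta>e_supp[OF e(1) that] e(2) by (simp add: dist_norm)
  show "integrable lborel (\<lambda>z. \<integral>y. norm (\<eta>e \<epsilon> (fst (z, y)) * Ed (x - fst (z, y)) (snd (z, y))) \<partial>lborel)"
  proof (rule Bochner_Integration.integrable_bound)
    show "integrable lborel (\<lambda>z. \<eta>e \<epsilon> z * Bd)"
      by (intro integrable_mult_left \<eta>e_integrable[OF e(1)])
    have m: "(\<lambda>p. norm (\<eta>e \<epsilon> (fst p) * Ed (x - fst p) (snd p))) \<in> borel_measurable (lborel \<Otimes>\<^sub>M lborel)"
      unfolding Ed_def by measurable
    show "(\<lambda>z. \<integral>y. norm (\<eta>e \<epsilon> (fst (z, y)) * Ed (x - fst (z, y)) (snd (z, y))) \<partial>lborel) \<in> borel_measurable lborel"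
      using lborel.borel_measurable_lebesgue_integral[of "\<lambda>z y. norm (\<eta>e \<epsilon> z * Ed (x - z) y)" lborel] m
      by (simp add: case_prod_beta')
    show "AE z in lborel. norm (\<integral>y. norm (\<eta>e \<epsilon> (fst (z, y)) * Ed (x - fst (z, y)) (snd (z, y))) \<partial>lborel)
        \<le> norm (\<eta>e \<epsilon> z * Bd)"
    proof (intro AE_I2)
      fix z
      have eq: "(\<integral>y. norm (\<eta>e \<epsilon> z * Ed (x - z) y) \<partial>lborel) = \<eta>e \<epsilon> z * (\<integral>y. \<bar>Ed (x - z) y\<bar> \<partial>lborel)"
        using \<eta>e_nonneg[OF e(1), of z] by (simp add: abs_mult)
      have nn: "0 \<le> (\<integral>y. \<bar>Ed (x - z) y\<bar> \<partial>lborel)" by (rule integral_nonneg_AE) auto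
      have "\<eta>e \<epsilon> z * (\<integral>y. \<bar>Ed (x - z) y\<bar> \<partial>lborel) \<le> \<eta>e \<epsilon> z * Bd"
      proof (cases "\<eta>e \<epsilon> z = 0")
        case False
        then show ?thesis using Ed_abs_integral[OF zin[OF False]] \<eta>e_nonneg[OF e(1), of z]
          by (intro mult_left_mono) auto
      qed simp
      then show "norm (\<integral>y. norm (\<eta>e \<epsilon> (fst (z, y)) * Ed (x - fst (z, y)) (snd (z, y))) \<partial>lborel)
        \<le> norm (\<eta>e \<epsilon> z * Bd)"
        using eq nn \<eta>e_nonneg[OF e(1), of z] Bd_nonneg by (simp add: abs_mult)
    qed
  qed
  show "AE z in lborel. integrable lborel (\<lambda>y. \<eta>e \<epsilon> (fst (z, y)) * Ed (x - fst (z, y)) (snd (z, y)))"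
  proof (intro AE_I2)
    fix z
    show "integrable lborel (\<lambda>y. \<eta>e \<epsilon> (fst (z, y)) * Ed (x - fst (z, y)) (snd (z, y)))"
    proof (cases "\<eta>e \<epsilon> z = 0")
      case False
      then show ?thesis using Ed_integrable[OF zin[OF False]] by (simp add: integrable_mult_right)
    qed simp
  qed
qed

lemma frac_lap_moll:
  assumes e: "\<epsilon> > 0" "\<epsilon> \<le> r"
  shows "frac_lap \<alpha> (mollify \<eta> \<epsilon> f) x = - frac_const DIM('a) \<alpha> * (\<integral>z. \<eta>e \<epsilon> z * Phi (x - z) \<partial>lborel)"
proof -
  have m: "mollify \<eta> \<epsilon> f = mfb \<epsilon>" using mollify_eq[OF e(1)] by (simp add: fun_eq_iff)
  have "(\<integral>y. (mfb \<epsilon> (x + y) + mfb \<epsilon> (x - y) - 2 * mfb \<epsilon> x) / norm y powr (real DIM('a) + 2 * \<alpha>) \<partial>lebesgue)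
      = (\<integral>y. (mfb \<epsilon> (x + y) + mfb \<epsilon> (x - y) - 2 * mfb \<epsilon> x) / norm y powr sx \<partial>lborel)"
    by (subst integral_completion) (auto simp: sx_def)
  also have "\<dots> = (\<integral>y. (\<integral>z. \<eta>e \<epsilon> z * Ed (x - z) y \<partial>lborel) \<partial>lborel)"
    using inner_z[OF e(1)] by simp
  also have "\<dots> = (\<integral>z. (\<integral>y. \<eta>e \<epsilon> z * Ed (x - z) y \<partial>lborel) \<partial>lborel)"
    using lborel_pair.Fubini_integral[of "\<lambda>z y. \<eta>e \<epsilon> z * Ed (x - z) y"] H_integrable[OF e]
    by (simp add: case_prod_beta')
  also have "\<dots> = (\<integral>z. \<eta>e \<epsilon> z * Phi (x - z) \<partial>lborel)"
    by (simp add: Phi_def)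
  finally show ?thesis by (simp add: frac_lap_def m)
qed

lemma conv_tendsto: "((\<lambda>\<epsilon>. \<integral>z. \<eta>e \<epsilon> z * Phi (x - z) \<partial>lborel) \<longlongrightarrow> Phi x) (at_right 0)"
proof (rule tendstoI)
  fix d :: real assume d: "d > 0"
  have c1: "isCont (\<lambda>z::'a. x - z) 0" by (intro continuous_intros)
  have c2: "isCont Phi ((\<lambda>z::'a. x - z) 0)" using Phi_cont by simp
  have "isCont (\<lambda>z. Phi (x - z)) 0" using isCont_o2[OF c1 c2] by simp
  then have "\<forall>e>0. \<exists>dd>0. \<forall>z. dist z 0 < dd \<longrightarrow> dist (Phi (x - z)) (Phi (x - 0)) < e"
    unfolding continuous_at_eps_delta .
  then obtain \<delta> where \<delta>: "\<delta> > 0" and \<delta>0: "\<forall>z. dist z 0 < \<delta> \<longrightarrow> dist (Phi (x - z)) (Phi (x - 0)) < d / 2"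
    using d half_gt_zero by blast
  have \<delta>': "\<bar>Phi (x - z) - Phi x\<bar> < d / 2" if "norm z < \<delta>" for z
    using \<delta>0[rule_format, of z] that by (simp add: dist_real_def)
  show "eventually (\<lambda>\<epsilon>. dist (\<integral>z. \<eta>e \<epsilon> z * Phi (x - z) \<partial>lborel) (Phi x) < d) (at_right 0)"
    unfolding eventually_at_right[OF zero_less_one]
  proof (intro exI[of _ "min 1 (min \<delta> r)"] conjI allI impI)
    show "0 < min 1 (min \<delta> r)" using \<delta> r0 by simp
    fix \<epsilon> :: real assume e0: "0 < \<epsilon>" and e1: "\<epsilon> < min 1 (min \<delta> r)"
    have zin: "x - z \<in> cball x r" if "\<eta>e \<epsilon> z \<noteq> 0" for z
      using \<eta>e_supp[OF e0 that] e1 by (simp add: dist_norm)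
    have iP: "integrable lborel (\<lambda>z. \<eta>e \<epsilon> z * Phi (x - z))"
    proof (rule Bochner_Integration.integrable_bound)
      show "integrable lborel (\<lambda>z. \<eta>e \<epsilon> z * Bd)" by (intro integrable_mult_left \<eta>e_integrable[OF e0])
      show "(\<lambda>z. \<eta>e \<epsilon> z * Phi (x - z)) \<in> borel_measurable lborel" by measurable
      show "AE z in lborel. norm (\<eta>e \<epsilon> z * Phi (x - z)) \<le> norm (\<eta>e \<epsilon> z * Bd)"
      proof (intro AE_I2)
        fix z
        show "norm (\<eta>e \<epsilon> z * Phi (x - z)) \<le> norm (\<eta>e \<epsilon> z * Bd)"
        proof (cases "\<eta>e \<epsilon> z = 0")
          case False
          then show ?thesis using Phi_bound[OF zin[OF False]] \<eta>e_nonneg[OF e0, of z] Bd_nonneg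
            by (simp add: abs_mult mult_left_mono)
        qed simp
      qed
    qed
    have i1: "integrable lborel (\<eta>e \<epsilon>)" by (rule \<eta>e_integrable[OF e0])
    have "(\<integral>z. \<eta>e \<epsilon> z * Phi (x - z) \<partial>lborel) - Phi x
        = (\<integral>z. \<eta>e \<epsilon> z * Phi (x - z) \<partial>lborel) - (\<integral>z. \<eta>e \<epsilon> z * Phi x \<partial>lborel)"
      using \<eta>e_int[OF e0] by simp
    also have "\<dots> = (\<integral>z. \<eta>e \<epsilon> z * (Phi (x - z) - Phi x) \<partial>lborel)"
      using iP i1 by (simp add: integral_diff integrable_mult_left right_diff_distrib)
    finally have eq: "(\<integral>z. \<eta>e \<epsilon> z * Phi (x - z) \<partial>lborel) - Phi x = (\<integral>z. \<eta>e \<epsilon> z * (Phi (x - z) - Phi x) \<partial>lborel)" .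
    have "\<bar>\<integral>z. \<eta>e \<epsilon> z * (Phi (x - z) - Phi x) \<partial>lborel\<bar> \<le> (\<integral>z. \<eta>e \<epsilon> z * (d / 2) \<partial>lborel)"
    proof (rule integral_abs_bound_integral)
      show "integrable lborel (\<lambda>z. \<eta>e \<epsilon> z * (Phi (x - z) - Phi x))"
        using iP i1 by (simp add: right_diff_distrib integrable_mult_left)
      show "integrable lborel (\<lambda>z. \<eta>e \<epsilon> z * (d / 2))" by (intro integrable_mult_left i1)
      fix z
      show "\<bar>\<eta>e \<epsilon> z * (Phi (x - z) - Phi x)\<bar> \<le> \<eta>e \<epsilon> z * (d / 2)"
      proof (cases "\<eta>e \<epsilon> z = 0")
        case False
        then have "norm z < \<delta>" using \<eta>e_supp[OF e0 False] e1 by simp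
        then have "\<bar>Phi (x - z) - Phi x\<bar> \<le> d / 2" using \<delta>'[of z] by simp
        then have "\<eta>e \<epsilon> z * \<bar>Phi (x - z) - Phi x\<bar> \<le> \<eta>e \<epsilon> z * (d / 2)"
          using \<eta>e_nonneg[OF e0, of z] by (rule mult_left_mono)
        then show ?thesis using \<eta>e_nonneg[OF e0, of z] by (simp add: abs_mult)
      qed simp
    qed
    also have "\<dots> = d / 2" using \<eta>e_int[OF e0] by simp
    finally show "dist (\<integral>z. \<eta>e \<epsilon> z * Phi (x - z) \<partial>lborel) (Phi x) < d"
      using eq d by (simp add: dist_real_def)
  qed
qed

theorem main: "((\<lambda>\<epsilon>. frac_lap \<alpha> (mollify \<eta> \<epsilon> f) x) \<longlongrightarrow> frac_lap \<alpha> f x) (at_right 0)"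
proof -
  have "((\<lambda>\<epsilon>. - frac_const DIM('a) \<alpha> * (\<integral>z. \<eta>e \<epsilon> z * Phi (x - z) \<partial>lborel))
      \<longlongrightarrow> - frac_const DIM('a) \<alpha> * Phi x) (at_right 0)"
    by (intro tendsto_mult_left conv_tendsto)
  moreover have "eventually (\<lambda>\<epsilon>. - frac_const DIM('a) \<alpha> * (\<integral>z. \<eta>e \<epsilon> z * Phi (x - z) \<partial>lborel)
      = frac_lap \<alpha> (mollify \<eta> \<epsilon> f) x) (at_right 0)"
    unfolding eventually_at_right[OF zero_less_one]
    using r0 by (intro exI[of _ "min 1 r"]) (auto simp: frac_lap_moll)
  ultimately show ?thesis
    unfolding frac_lap_f by (rule Lim_transform_eventually)
qed

end

theorem lemma3p12:
  fixes \<alpha> :: real and \<Lambda> :: "'a::euclidean_space set"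
    and f \<eta> :: "'a \<Rightarrow> real" and x :: 'a
  assumes "0 < \<alpha>" "\<alpha> < 1"
    and "closed \<Lambda>" "\<Lambda> \<in> null_sets lebesgue"
    and "f \<in> L2alpha \<alpha>" "smooth_on f (- \<Lambda>)"
    and "std_mollifier \<eta>"
    and "x \<notin> \<Lambda>"
  shows "((\<lambda>\<epsilon>. frac_lap \<alpha> (mollify \<eta> \<epsilon> f) x) \<longlongrightarrow> frac_lap \<alpha> f x) (at_right 0)"
proof -
  interpret LP \<alpha> \<Lambda> f \<eta> x
    by (unfold_locales) (use assms in auto)
  have op: "open (- \<Lambda>)" using assms(3) by auto
  have xin: "x \<in> - \<Lambda>" using assms(8) by simp
  obtain r M where r: "r > 0" "M \<ge> 0" "cball x (2 * r) \<subseteq> - \<Lambda>"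
    and est: "\<And>w y. w \<in> cball x r \<Longrightarrow> y \<in> cball 0 r \<Longrightarrow>
        \<bar>f (w + y) + f (w - y) - 2 * f w\<bar> \<le> M * (norm y)\<^sup>2"
    using local_second_diff[OF assms(6) op xin] by blast
  have sub: "cball x r \<subseteq> - \<Lambda>"
    using r subset_cball[of r "2 * r" x] by auto
  have "continuous_on (cball x r) f" using f_cont sub continuous_on_subset by blast
  then have "bounded (f ` cball x r)" using compact_continuous_image compact_imp_bounded compact_cball by blast
  then obtain F where F0: "\<forall>v\<in>f ` cball x r. \<bar>v\<bar> \<le> F" unfolding bounded_real by blast
  have F: "\<And>w. w \<in> cball x r \<Longrightarrow> \<bar>f w\<bar> \<le> F" using F0 by blast
  have "continuous_on (cball 0 1) \<eta>" using \<eta>_cont continuous_on_subset by blast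
  then have "bounded (\<eta> ` cball 0 1)" using compact_continuous_image compact_imp_bounded compact_cball by blast
  then obtain B0 where B00: "\<forall>v\<in>\<eta> ` cball 0 1. \<bar>v\<bar> \<le> B0" unfolding bounded_real by blast
  have B0: "\<And>y. y \<in> cball 0 1 \<Longrightarrow> \<bar>\<eta> y\<bar> \<le> B0" using B00 by blast
  have B0n: "B0 \<ge> 0" using B0[of 0] by simp
  have \<eta>b: "\<eta> y \<le> B0" for y
  proof (cases "norm y \<le> 1")
    case True then show ?thesis using B0[of y] by simp
  next
    case False then have "\<eta> y = 0" using \<eta>_supp[of y] by force
    then show ?thesis using B0n by simp
  qed
  interpret LP3 \<alpha> \<Lambda> f \<eta> x r M F B0
    by (unfold_locales) (use r est F \<eta>b in auto)
  show ?thesis by (rule main)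
qed

end
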